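(* Consider FedAvg with full device participation as described in the context, and let Assumptions (A1)–(A4) hold. Set $\gamma = \max\{8L/\mu,\, E\}$ and learning rates $\eta_t = \frac{2}{\mu(\gamma+t)}$, and let $$B = \sum_{k=1}^N p_k^2\sigma_k^2 + 6L\Gamma + 8(E-1)^2 G^2 .$$ Let $\mathcal{R}$ be a data reconstruction function that is $L_{\mathcal{R}}$-Lipschitz, and let $\mathbf{x}$ be the private data. Then for every round $t \ge 1$, $$\mathbb{E}\,\|\mathbf{x} - \mathcal{R}(\mathbf{w}_t)\|^2 \;\le\; 2\,\mathbb{E}\,\|\mathbf{x} - \mathcal{R}(\mathbf{w}^\star)\|^2 + \frac{2L_{\mathcal{R}}^2}{\gamma + t}\left( \frac{4B}{\mu^2} + (\gamma+1)\,\mathbb{E}\,\|\mathbf{w}_1 - \mathbf{w}^\star\|^2 \right).$$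
   Context: Federated setting: there are $N$ devices with weights $p_k \ge 0$, $\sum_{k=1}^N p_k = 1$. Device $k$ holds a finite dataset $D^k$ and has local objective $\mathcal{L}_k(\mathbf{w}) = \frac{1}{n_k}\sum_{j=1}^{n_k} \ell(\mathbf{w}; (\mathbf{x}^k_j, y^k_j))$; for a sample $\xi$ of $D^k$, $\nabla\mathcal{L}_k(\mathbf{w},\xi)$ denotes the stochastic gradient of the loss at that sample. The global objective is $\mathcal{L}(\mathbf{w}) = \sum_{k=1}^N p_k \mathcal{L}_k(\mathbf{w})$, with minimizer $\mathbf{w}^\star$ and minimum value $\mathcal{L}^\ast$; $\mathcal{L}_k^\ast$ is the minimum value of $\mathcal{L}_k$, and $\Gamma = \mathcal{L}^\ast - \sum_{k=1}^N p_k \mathcal{L}_k^\ast \ (\ge 0)$. FedAvg with full participation: fix an integer $E \ge 1$ and let $\mathcal{I}_E = \{nE : n = 1,2,\dots\}$. All devices start at a common (possibly random) $\mathbf{w}_1^k = \mathbf{w}_1$. For $t = 1,2,\dots$, each device computes $\mathbf{v}^k_{t+1} = \mathbf{w}^k_t - \eta_t \nabla \mathcal{L}_k(\mathbf{w}^k_t, \xi^k_t)$, where $\xi^k_t$ is drawn uniformly at random from $D^k$ (independently). If $t+1 \notin \mathcal{I}_E$ then $\mathbf{w}^k_{t+1} = \mathbf{v}^k_{t+1}$; if $t+1 \in \mathcal{I}_E$ then $\mathbf{w}^k_{t+1} = \sum_{j=1}^N p_j \mathbf{v}^j_{t+1}$ for all $k$. The global model at step $t$ is $\mathbf{w}_t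 = \sum_{k=1}^N p_k \mathbf{w}^k_t$. Assumptions: (A1) each $\mathcal{L}_k$ is $L$-smooth: $\mathcal{L}_k(\mathbf{v}) \le \mathcal{L}_k(\mathbf{w}) + (\mathbf{v}-\mathbf{w})^\top\nabla\mathcal{L}_k(\mathbf{w}) + \frac{L}{2}\|\mathbf{v}-\mathbf{w}\|_2^2$ for all $\mathbf{v},\mathbf{w}$. (A2) each $\mathcal{L}_k$ is $\mu$-strongly convex ($\mu>0$): $\mathcal{L}_k(\mathbf{v}) \ge \mathcal{L}_k(\mathbf{w}) + (\mathbf{v}-\mathbf{w})^\top\nabla\mathcal{L}_k(\mathbf{w}) + \frac{\mu}{2}\|\mathbf{v}-\mathbf{w}\|_2^2$. (A3) $\mathbb{E}\|\nabla\mathcal{L}_k(\mathbf{w}^k_t,\xi^k_t) - \nabla\mathcal{L}_k(\mathbf{w}^k_t)\|^2 \le \sigma_k^2$ for all $k,t$. (A4) $\mathbb{E}\|\nabla\mathcal{L}_k(\mathbf{w}^k_t,\xi^k_t)\|^2 \le G^2$ for all $k,t$. Reconstruction: the private data is $\mathbf{x}\in[0,1]^d$. A data reconstruction function $\mathcal{R}$ maps model parameters to a reconstruction in $\mathbb{R}^d$; it may be randomized (e.g. random initialization), with randomness independent of the FL training, and for every realization of its randomness it satisfies $\|\mathcal{R}(\mathbf{v}) - \mathcal{R}(\mathbf{w})\| \le L_{\mathcal{R}}\|\mathbf{v}-\mathbf{w}\|$ for all $\mathbf{v},\mathbf{w}$. All expectations are over all randomness (stochastic gradients and the randomness of $\mathcal{R}$).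 *)

theory Defs
  imports "HOL-Probability.Probability"
begin

text \<open>Devices are indexed by k < N (the paper uses 1..N). Device k holds the
dataset D k (a nonempty list of samples), n_k = length (D k).
The per-sample loss is ell :: 'a => 'z => real, and g w z is its gradient in w.\<close>

definition local_obj :: "('a \<Rightarrow> 'z \<Rightarrow> real) \<Rightarrow> (nat \<Rightarrow> 'z list) \<Rightarrow> nat \<Rightarrow> 'a \<Rightarrow> real" where
  "local_obj ell D k w = (1 / real (length (D k))) * (\<Sum>j<length (D k). ell w (D k ! j))"

definition local_grad :: "('a \<Rightarrow> 'z \<Rightarrow> 'a::real_vector) \<Rightarrow> (nat \<Rightarrow> 'z list) \<Rightarrow> nat \<Rightarrow> 'a \<Rightarrow> 'a" where
  "local_grad g D k w = (1 / real (length (D k))) *\<^sub>R (\<Sum>j<length (D k). g w (D k ! j))"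

definition global_obj :: "(nat \<Rightarrow> real) \<Rightarrow> nat \<Rightarrow> ('a \<Rightarrow> 'z \<Rightarrow> real) \<Rightarrow> (nat \<Rightarrow> 'z list) \<Rightarrow> 'a \<Rightarrow> real" where
  "global_obj p N ell D w = (\<Sum>k<N. p k * local_obj ell D k w)"

text \<open>FedAvg local iterates. fedavg_w p N E eta sg w1 xi t k is w^k_t for t >= 1
(the value at t = 0 is a junk value). sg k w j is the stochastic gradient of device k
at w using sample index j, and xi t k is the sample index drawn by device k at step t.\<close>

primrec fedavg_w :: "(nat \<Rightarrow> real) \<Rightarrow> nat \<Rightarrow> nat \<Rightarrow> (nat \<Rightarrow> real) \<Rightarrow>
    (nat \<Rightarrow> 'a::real_vector \<Rightarrow> nat \<Rightarrow> 'a) \<Rightarrow> 'a \<Rightarrow> (nat \<Rightarrow> nat \<Rightarrow> nat) \<Rightarrow> nat \<Rightarrow> nat \<Rightarrow> 'a" where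
  "fedavg_w p N E eta sg w1 xi 0 = (\<lambda>k. w1)"
| "fedavg_w p N E eta sg w1 xi (Suc t) =
     (if t = 0 then (\<lambda>k. w1)
      else (let W = fedavg_w p N E eta sg w1 xi t;
                v = (\<lambda>j. W j - eta t *\<^sub>R sg j (W j) (xi t j))
            in if Suc t mod E = 0 then (\<lambda>k. \<Sum>j<N. p j *\<^sub>R v j) else v))"

definition fedavg_global :: "(nat \<Rightarrow> real) \<Rightarrow> nat \<Rightarrow> nat \<Rightarrow> (nat \<Rightarrow> real) \<Rightarrow>
    (nat \<Rightarrow> 'a::real_vector \<Rightarrow> nat \<Rightarrow> 'a) \<Rightarrow> 'a \<Rightarrow> (nat \<Rightarrow> nat \<Rightarrow> nat) \<Rightarrow> nat \<Rightarrow> 'a" where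
  "fedavg_global p N E eta sg w1 xi t = (\<Sum>k<N. p k *\<^sub>R fedavg_w p N E eta sg w1 xi t k)"

text \<open>The probability space of all randomness: the initial model w1 (distribution W1),
the independent uniform sample indices xi_t^k (t, k<N), and the independent
randomness r of the reconstruction function (distribution Q).\<close>

definition fedavg_space :: "'a measure \<Rightarrow> nat \<Rightarrow> (nat \<Rightarrow> 'z list) \<Rightarrow> 'r measure \<Rightarrow>
    ('a \<times> (nat \<times> nat \<Rightarrow> nat) \<times> 'r) measure" where
  "fedavg_space W1 N D Q =
     W1 \<Otimes>\<^sub>M ((\<Pi>\<^sub>M tk\<in>UNIV \<times> {..<N}. measure_pmf (pmf_of_set {..<length (D (snd tk))})) \<Otimes>\<^sub>M Q)"

end

theory Submission
  imports Defs
begin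

lemma fw_cong:
  assumes "\<forall>s<t. \<forall>j<N. xi s j = xi' s j" "k < N"
  shows "fedavg_w p N E eta sg w1 xi t k = fedavg_w p N E eta sg w1 xi' t k"
  using assms
proof (induction t arbitrary: k)
  case 0 then show ?case by simp
next
  case (Suc t)
  have IH: "\<And>k. k < N \<Longrightarrow> fedavg_w p N E eta sg w1 xi t k = fedavg_w p N E eta sg w1 xi' t k"
    using Suc.IH Suc.prems by auto
  have xe: "\<And>j. j < N \<Longrightarrow> xi t j = xi' t j" using Suc.prems by auto
  show ?case using Suc.prems(2)
    by (auto simp: Let_def IH xe intro!: sum.cong)
qed

lemma avg_identity:
  fixes X :: "'a::real_inner" and Z :: "nat \<Rightarrow> 'a"
  assumes "n > 0" "(\<Sum>j<n. Z j) = 0"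
  shows "(\<Sum>j<n. (norm (X - c *\<^sub>R Z j))\<^sup>2) / real n = (norm X)\<^sup>2 + c\<^sup>2 * ((\<Sum>j<n. (norm (Z j))\<^sup>2) / real n)"
proof -
  have e: "(norm (X - c *\<^sub>R Z j))\<^sup>2 = (norm X)\<^sup>2 - 2 * c * (X \<bullet> Z j) + c\<^sup>2 * (norm (Z j))\<^sup>2" for j
    unfolding power2_norm_eq_inner
    by (simp add: inner_diff_left inner_diff_right inner_commute algebra_simps power2_eq_square)
  have s: "(\<Sum>j<n. X \<bullet> Z j) = 0"
    using assms(2) by (metis inner_sum_right inner_zero_right)
  have "(\<Sum>j<n. (norm (X - c *\<^sub>R Z j))\<^sup>2) = real n * (norm X)\<^sup>2 - 2 * c * (\<Sum>j<n. X \<bullet> Z j) + c\<^sup>2 * (\<Sum>j<n. (norm (Z j))\<^sup>2)"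
    by (simp add: e sum.distrib sum_subtractf sum_distrib_left)
  then show ?thesis using assms(1) s by (simp add: field_simps)
qed

lemma grad_measurable:
  fixes f :: "'a::euclidean_space \<Rightarrow> real"
  assumes d: "\<And>w. GDERIV f w :> G w"
  shows "G \<in> borel_measurable borel"
proof -
  have cont: "continuous_on UNIV f"
    using d unfolding gderiv_def
    by (meson continuous_at_imp_continuous_on has_derivative_continuous)
  have comp: "(\<lambda>w. G w \<bullet> b) \<in> borel_measurable borel" if b: "b \<in> Basis" for b
  proof (rule borel_measurable_LIMSEQ_real)
    fix w :: 'a
    have D: "((\<lambda>t. f (w + t *\<^sub>R b)) has_real_derivative (b \<bullet> G w)) (at 0)"
    proof -
      have "((\<lambda>t. w + t *\<^sub>R b) has_derivative (\<lambda>t. t *\<^sub>R b)) (at 0)"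
        by (auto intro!: derivative_eq_intros)
      moreover have "(f has_derivative (\<lambda>h. h \<bullet> G w)) (at (w + 0 *\<^sub>R b))"
        using d[of w] unfolding gderiv_def by simp
      ultimately have "((\<lambda>t. f (w + t *\<^sub>R b)) has_derivative (\<lambda>t. (t *\<^sub>R b) \<bullet> G w)) (at 0)"
        by (rule has_derivative_compose)
      then show ?thesis
        unfolding has_field_derivative_def
        by (rule has_derivative_eq_rhs) (auto simp: fun_eq_iff)
    qed
    then have L: "((\<lambda>h. (f (w + h *\<^sub>R b) - f w) / h) \<longlongrightarrow> b \<bullet> G w) (at 0)"
      unfolding DERIV_def by simp
    have s: "filterlim (\<lambda>n. 1 / real (Suc n)) (at 0) sequentially"
      unfolding filterlim_at using LIMSEQ_Suc[OF lim_inverse_n'] by auto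
    show "(\<lambda>n. (f (w + (1 / real (Suc n)) *\<^sub>R b) - f w) / (1 / real (Suc n))) \<longlonglongrightarrow> G w \<bullet> b"
      using filterlim_compose[OF L s] by (simp add: inner_commute)
  next
    fix n
    show "(\<lambda>w. (f (w + (1 / real (Suc n)) *\<^sub>R b) - f w) / (1 / real (Suc n))) \<in> borel_measurable borel"
      using cont by (intro borel_measurable_divide borel_measurable_diff borel_measurable_const
          borel_measurable_continuous_onI continuous_on_compose2[OF cont] continuous_intros) auto
  qed
  have "G = (\<lambda>w. \<Sum>b\<in>Basis. (G w \<bullet> b) *\<^sub>R b)" by (simp add: euclidean_representation)
  also have "\<dots> \<in> borel_measurable borel"
    using comp by (intro borel_measurable_sum borel_measurable_scaleR) auto
  finally show ?thesis .
qed

lemma avg_PiM: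
  fixes S :: "'i \<Rightarrow> 'b set" and h :: "('i \<Rightarrow> 'b) \<Rightarrow> ennreal"
  assumes fin: "finite (S c)" "S c \<noteq> {}" and c: "c \<in> I"
    and h[measurable]: "h \<in> borel_measurable (PiM I (\<lambda>i. measure_pmf (pmf_of_set (S i))))"
  shows "(\<integral>\<^sup>+\<xi>. h \<xi> \<partial>PiM I (\<lambda>i. measure_pmf (pmf_of_set (S i))))
       = (\<integral>\<^sup>+\<xi>. (\<Sum>j\<in>S c. h (\<xi>(c:=j))) / of_nat (card (S c)) \<partial>PiM I (\<lambda>i. measure_pmf (pmf_of_set (S i))))"
proof -
  define MM where "MM = (\<lambda>i. measure_pmf (pmf_of_set (S i)))"
  define M' where "M' = PiM (I - {c}) MM"
  have Ic: "insert c (I - {c}) = I" using c by auto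
  have prob: "\<And>i. prob_space (MM i)" unfolding MM_def by (rule prob_space_measure_pmf)
  interpret M': prob_space M' unfolding M'_def using prob by (intro prob_space_PiM) auto
  interpret Mc: prob_space "MM c" using prob by auto
  interpret P: pair_sigma_finite "MM c" M' by unfold_locales
  have eq: "distr (MM c \<Otimes>\<^sub>M M') (PiM I MM) (\<lambda>(x, X). X(c := x)) = PiM I MM"
    using distr_pair_PiM_eq_PiM[of "I - {c}" MM c] prob unfolding Ic M'_def by auto
  have phi[measurable]: "(\<lambda>(x, X). X(c := x)) \<in> measurable (MM c \<Otimes>\<^sub>M M') (PiM I MM)"
  proof -
    have "(\<lambda>(x, X). X(c := x)) = (\<lambda>y. (snd y)(c := fst y))" by auto
    also have "\<dots> \<in> measurable (MM c \<Otimes>\<^sub>M M') (PiM I MM)"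
      unfolding M'_def
      by (rule measurable_fun_upd[where J="I - {c}"]) (use c in auto)
    finally show ?thesis .
  qed
  have upd[measurable]: "(\<lambda>\<xi>. \<xi>(c := j)) \<in> measurable (PiM I MM) (PiM I MM)" for j
    by (rule measurable_fun_upd[where J="I"]) (use c in \<open>auto simp: MM_def\<close>)
  have hM[measurable]: "h \<in> borel_measurable (PiM I MM)" using h unfolding MM_def .
  have gen: "(\<integral>\<^sup>+\<xi>. F \<xi> \<partial>PiM I MM) = (\<integral>\<^sup>+X. (\<integral>\<^sup>+x. F (X(c:=x)) \<partial>MM c) \<partial>M')"
    if F[measurable]: "F \<in> borel_measurable (PiM I MM)" for F
  proof -
    have "(\<integral>\<^sup>+\<xi>. F \<xi> \<partial>PiM I MM) = (\<integral>\<^sup>+\<xi>. F \<xi> \<partial>distr (MM c \<Otimes>\<^sub>M M') (PiM I MM) (\<lambda>(x, X). X(c := x)))"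
      by (simp add: eq)
    also have "\<dots> = (\<integral>\<^sup>+y. F (case y of (x, X) \<Rightarrow> X(c := x)) \<partial>(MM c \<Otimes>\<^sub>M M'))"
      by (rule nn_integral_distr) auto
    also have "\<dots> = (\<integral>\<^sup>+X. (\<integral>\<^sup>+x. F (X(c:=x)) \<partial>MM c) \<partial>M')"
      by (subst P.nn_integral_snd[symmetric]) auto
    finally show ?thesis .
  qed
  have inner: "(\<integral>\<^sup>+x. h (X(c:=x)) \<partial>MM c) = (\<Sum>j\<in>S c. h (X(c:=j))) / of_nat (card (S c))" for X
    unfolding MM_def using fin by (subst nn_integral_pmf_of_set) auto
  have "(\<integral>\<^sup>+\<xi>. h \<xi> \<partial>PiM I MM) = (\<integral>\<^sup>+X. (\<Sum>j\<in>S c. h (X(c:=j))) / of_nat (card (S c)) \<partial>M')"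
    by (subst gen) (auto simp: inner)
  also have "\<dots> = (\<integral>\<^sup>+X. (\<integral>\<^sup>+x. (\<Sum>j\<in>S c. h ((X(c:=x))(c:=j))) / of_nat (card (S c)) \<partial>MM c) \<partial>M')"
    by (simp add: Mc.emeasure_space_1)
  also have "\<dots> = (\<integral>\<^sup>+\<xi>. (\<Sum>j\<in>S c. h (\<xi>(c:=j))) / of_nat (card (S c)) \<partial>PiM I MM)"
    by (subst gen) auto
  finally show ?thesis unfolding MM_def .
qed

locale FA =
  fixes p :: "nat \<Rightarrow> real" and N E :: nat and D :: "nat \<Rightarrow> 'z list"
    and ell :: "'a::euclidean_space \<Rightarrow> 'z \<Rightarrow> real" and g :: "'a \<Rightarrow> 'z \<Rightarrow> 'a"
    and L mu :: real and wstar :: 'a and W1 :: "'a measure" and Q :: "'r measure"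
  assumes p_nonneg: "\<forall>k<N. p k \<ge> 0"
    and p_sum: "(\<Sum>k<N. p k) = 1"
    and E_pos: "E \<ge> 1"
    and D_nonempty: "\<forall>k<N. D k \<noteq> []"
    and grad: "\<forall>k<N. \<forall>j<length (D k). \<forall>w. GDERIV (\<lambda>v. ell v (D k ! j)) w :> g w (D k ! j)"
    and A1: "\<forall>k<N. \<forall>v w. local_obj ell D k v \<le> local_obj ell D k w
               + (v - w) \<bullet> local_grad g D k w + L / 2 * (norm (v - w))\<^sup>2"
    and mu_pos: "mu > 0"
    and A2: "\<forall>k<N. \<forall>v w. local_obj ell D k v \<ge> local_obj ell D k w
               + (v - w) \<bullet> local_grad g D k w + mu / 2 * (norm (v - w))\<^sup>2"
    and wstar_min: "\<forall>w. global_obj p N ell D wstar \<le> global_obj p N ell D w"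
    and W1_prob: "prob_space W1" and W1_sets: "sets W1 = sets borel"
    and Q_prob: "prob_space Q"
begin

definition "n k = length (D k)"
definition "gam = max (8 * L / mu) (real E)"
definition "eta = (\<lambda>s. 2 / (mu * (max (8 * L / mu) (real E) + real s)))"
definition "sg = (\<lambda>k w j. g w (D k ! j))"
definition "II = (UNIV :: nat set) \<times> {..<N}"
definition "MM = (\<lambda>tk. measure_pmf (pmf_of_set {..<length (D (snd tk))}))"
definition "Om = fedavg_space W1 N D Q"
definition "xic \<omega> = (\<lambda>s k. if k < N \<and> fst (snd \<omega>) (s,k) < n k then fst (snd \<omega>) (s,k) else 0)"
definition "W t k \<omega> = fedavg_w p N E eta sg (fst \<omega>) (xic \<omega>) t k"
definition "Wb t \<omega> = (\<Sum>k<N. p k *\<^sub>R W t k \<omega>)"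
definition "upd c j \<omega> = (fst \<omega>, ((fst (snd \<omega>))(c:=j), snd (snd \<omega>)))"

lemma Om_eq: "Om = W1 \<Otimes>\<^sub>M (PiM II MM \<Otimes>\<^sub>M Q)"
  unfolding Om_def fedavg_space_def II_def MM_def ..

lemma n_pos: "k < N \<Longrightarrow> n k > 0"
  using D_nonempty by (auto simp: n_def)

lemma xi_meas[measurable]: "k < N \<Longrightarrow> (\<lambda>\<omega>. fst (snd \<omega>) (s,k)) \<in> measurable Om (count_space UNIV)"
  unfolding Om_eq
  apply (rule measurable_compose[OF measurable_snd])
  apply (rule measurable_compose[OF measurable_fst])
  apply (rule measurable_compose[OF measurable_component_singleton])
   apply (auto simp: II_def MM_def)
  done

lemma xic_meas[measurable]: "(\<lambda>\<omega>. xic \<omega> s k) \<in> measurable Om (count_space UNIV)"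
proof (cases "k < N")
  case True
  have "(\<lambda>\<omega>. (\<lambda>i. if i < n k then i else 0) (fst (snd \<omega>) (s,k))) \<in> measurable Om (count_space UNIV)"
    by (rule measurable_compose[OF xi_meas[OF True]]) simp
  then show ?thesis using True unfolding xic_def by simp
next
  case False
  then show ?thesis unfolding xic_def by simp
qed

lemma xic_lt: "k < N \<Longrightarrow> xic \<omega> s k < n k"
  using n_pos by (auto simp: xic_def)

lemma g_meas: "k < N \<Longrightarrow> j < n k \<Longrightarrow> (\<lambda>w. g w (D k ! j)) \<in> borel_measurable borel"
  using grad by (intro grad_measurable[of "\<lambda>v. ell v (D k ! j)"]) (auto simp: n_def)

lemma fst_meas[measurable]: "fst \<in> borel_measurable Om"
proof -
  have "measurable Om W1 = measurable Om borel" by (rule measurable_cong_sets) (auto simp: W1_sets)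
  moreover have "fst \<in> measurable Om W1" unfolding Om_eq by (rule measurable_fst)
  ultimately show ?thesis by simp
qed

lemma gcomp_meas:
  assumes k: "k < N" and F[measurable]: "F \<in> borel_measurable Om"
  shows "(\<lambda>\<omega>. g (F \<omega>) (D k ! xic \<omega> s k)) \<in> borel_measurable Om"
proof -
  let ?f = "\<lambda>j \<omega>. g (F \<omega>) (D k ! (if j < n k then j else 0))"
  have "(\<lambda>\<omega>. ?f (xic \<omega> s k) \<omega>) \<in> borel_measurable Om"
  proof (rule measurable_compose_countable[OF _ xic_meas])
    fix j
    have "(\<lambda>w. g w (D k ! (if j < n k then j else 0))) \<in> borel_measurable borel"
      using g_meas[OF k] n_pos[OF k] by auto
    then show "(\<lambda>\<omega>. ?f j \<omega>) \<in> borel_measurable Om"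
      using measurable_compose[OF F] by blast
  qed
  moreover have "?f (xic \<omega> s k) \<omega> = g (F \<omega>) (D k ! xic \<omega> s k)" for \<omega>
    using xic_lt[OF k, of \<omega> s] by simp
  ultimately show ?thesis by simp
qed

lemma W_meas[measurable]: "k < N \<Longrightarrow> W t k \<in> borel_measurable Om"
proof (induction t arbitrary: k)
  case 0 then show ?case by (simp add: W_def)
next
  case (Suc t)
  have IH: "\<And>k. k < N \<Longrightarrow> W t k \<in> borel_measurable Om" by (rule Suc.IH)
  have gm: "\<And>k. k < N \<Longrightarrow> (\<lambda>\<omega>. W t k \<omega> - eta t *\<^sub>R g (W t k \<omega>) (D k ! xic \<omega> t k)) \<in> borel_measurable Om"
    by (intro borel_measurable_diff borel_measurable_scaleR borel_measurable_const gcomp_meas IH)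
  have eq: "W (Suc t) k = (if t = 0 then fst else if Suc t mod E = 0 then
     (\<lambda>\<omega>. \<Sum>j<N. p j *\<^sub>R (W t j \<omega> - eta t *\<^sub>R g (W t j \<omega>) (D j ! xic \<omega> t j)))
     else (\<lambda>\<omega>. W t k \<omega> - eta t *\<^sub>R g (W t k \<omega>) (D k ! xic \<omega> t k)))"
    by (auto simp: W_def sg_def Let_def fun_eq_iff)
  show ?case unfolding eq using Suc.prems gm
    by (auto intro!: borel_measurable_sum borel_measurable_scaleR)
qed

lemma Om_gen:
  assumes F[measurable]: "F \<in> borel_measurable Om"
  shows "(\<integral>\<^sup>+\<omega>. F \<omega> \<partial>Om) = (\<integral>\<^sup>+w. (\<integral>\<^sup>+r. (\<integral>\<^sup>+\<xi>. F (w, (\<xi>, r)) \<partial>PiM II MM) \<partial>Q) \<partial>W1)"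
proof -
  interpret W: prob_space W1 by (rule W1_prob)
  interpret Qp: prob_space Q by (rule Q_prob)
  interpret X: prob_space "PiM II MM" unfolding MM_def by (intro prob_space_PiM prob_space_measure_pmf)
  interpret P2: pair_sigma_finite "PiM II MM" Q by unfold_locales
  interpret XQ: prob_space "PiM II MM \<Otimes>\<^sub>M Q" by (intro prob_space_pair X.prob_space_axioms Qp.prob_space_axioms)
  have F': "F \<in> borel_measurable (W1 \<Otimes>\<^sub>M (PiM II MM \<Otimes>\<^sub>M Q))" using F unfolding Om_eq .
  have "(\<integral>\<^sup>+\<omega>. F \<omega> \<partial>Om) = (\<integral>\<^sup>+w. (\<integral>\<^sup>+y. F (w, y) \<partial>(PiM II MM \<Otimes>\<^sub>M Q)) \<partial>W1)"
    unfolding Om_eq by (rule sigma_finite_measure.nn_integral_fst[symmetric, OF _ F']) unfold_locales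
  also have "\<dots> = (\<integral>\<^sup>+w. (\<integral>\<^sup>+r. (\<integral>\<^sup>+\<xi>. F (w, (\<xi>, r)) \<partial>PiM II MM) \<partial>Q) \<partial>W1)"
  proof (rule nn_integral_cong)
    fix w assume w: "w \<in> space W1"
    have "(\<lambda>y. F (w, y)) \<in> borel_measurable (PiM II MM \<Otimes>\<^sub>M Q)"
      using measurable_Pair2[OF F' w] .
    then show "(\<integral>\<^sup>+y. F (w, y) \<partial>(PiM II MM \<Otimes>\<^sub>M Q)) = (\<integral>\<^sup>+r. (\<integral>\<^sup>+\<xi>. F (w, (\<xi>, r)) \<partial>PiM II MM) \<partial>Q)"
      by (subst P2.nn_integral_snd[symmetric]) auto
  qed
  finally show ?thesis .
qed

lemma upd_meas_inner:
  assumes F[measurable]: "F \<in> borel_measurable Om" and w: "w \<in> space W1" and r: "r \<in> space Q"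
  shows "(\<lambda>\<xi>. F (w, (\<xi>, r))) \<in> borel_measurable (PiM II MM)"
proof -
  have F': "F \<in> borel_measurable (W1 \<Otimes>\<^sub>M (PiM II MM \<Otimes>\<^sub>M Q))" using F unfolding Om_eq .
  have "(\<lambda>y. F (w, y)) \<in> borel_measurable (PiM II MM \<Otimes>\<^sub>M Q)"
    using measurable_Pair2[OF F' w] .
  from measurable_Pair1[OF this r] show ?thesis .
qed

lemma avg_Om:
  assumes m: "m < N" and f[measurable]: "f \<in> borel_measurable Om"
  shows "(\<integral>\<^sup>+\<omega>. f \<omega> \<partial>Om) = (\<integral>\<^sup>+\<omega>. (\<Sum>j<n m. f (upd (t,m) j \<omega>)) / of_nat (n m) \<partial>Om)"
proof -
  have c: "(t,m) \<in> II" using m by (simp add: II_def)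
  have updm: "(\<lambda>\<omega>. upd (t,m) j \<omega>) \<in> measurable Om Om" for j
  proof -
    have "(\<lambda>\<omega>. upd (t,m) j \<omega>) = (\<lambda>\<omega>. (fst \<omega>, ((fst (snd \<omega>))((t,m):=j), snd (snd \<omega>))))"
      by (simp add: upd_def fun_eq_iff)
    also have "\<dots> \<in> measurable Om Om"
      unfolding Om_eq
    proof (intro measurable_Pair measurable_fst measurable_compose[OF measurable_snd measurable_snd])
      show "(\<lambda>\<omega>. (fst (snd \<omega>))((t, m) := j)) \<in> W1 \<Otimes>\<^sub>M (Pi\<^sub>M II MM \<Otimes>\<^sub>M Q) \<rightarrow>\<^sub>M Pi\<^sub>M II MM"
        by (rule measurable_fun_upd[where J=II]) (use c in \<open>auto simp: MM_def\<close>)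
    qed
    finally show ?thesis .
  qed
  have avgm: "(\<lambda>\<omega>. (\<Sum>j<n m. f (upd (t,m) j \<omega>)) / of_nat (n m)) \<in> borel_measurable Om"
    by (intro borel_measurable_divide_ennreal borel_measurable_sum measurable_compose[OF updm f] borel_measurable_const)
  have cardn: "card {..<length (D (snd (t,m)))} = n m" by (simp add: n_def)
  have "(\<integral>\<^sup>+\<omega>. f \<omega> \<partial>Om) = (\<integral>\<^sup>+w. (\<integral>\<^sup>+r. (\<integral>\<^sup>+\<xi>. f (w, (\<xi>, r)) \<partial>PiM II MM) \<partial>Q) \<partial>W1)"
    by (rule Om_gen[OF f])
  also have "\<dots> = (\<integral>\<^sup>+w. (\<integral>\<^sup>+r. (\<integral>\<^sup>+\<xi>. (\<Sum>j<n m. f (upd (t,m) j (w, (\<xi>, r)))) / of_nat (n m) \<partial>PiM II MM) \<partial>Q) \<partial>W1)"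
  proof (rule nn_integral_cong, rule nn_integral_cong)
    fix w r assume w: "w \<in> space W1" and r: "r \<in> space Q"
    have hm: "(\<lambda>\<xi>. f (w, (\<xi>, r))) \<in> borel_measurable (PiM II (\<lambda>i. measure_pmf (pmf_of_set {..<length (D (snd i))})))"
      using upd_meas_inner[OF f w r] unfolding MM_def .
    have "(\<integral>\<^sup>+\<xi>. f (w, (\<xi>, r)) \<partial>PiM II MM) = (\<integral>\<^sup>+\<xi>. (\<Sum>j\<in>{..<length (D (snd (t,m)))}. f (w, (\<xi>((t,m):=j), r))) / of_nat (card {..<length (D (snd (t,m)))}) \<partial>PiM II MM)"
      unfolding MM_def
      by (rule avg_PiM[where S="\<lambda>i. {..<length (D (snd i))}", OF _ _ c hm]) (use n_pos[OF m] in \<open>auto simp: n_def\<close>)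
    also have "\<dots> = (\<integral>\<^sup>+\<xi>. (\<Sum>j<n m. f (upd (t,m) j (w, (\<xi>, r)))) / of_nat (n m) \<partial>PiM II MM)"
      by (simp add: cardn upd_def n_def)
    finally show "(\<integral>\<^sup>+\<xi>. f (w, (\<xi>, r)) \<partial>PiM II MM) = (\<integral>\<^sup>+\<xi>. (\<Sum>j<n m. f (upd (t,m) j (w, (\<xi>, r)))) / of_nat (n m) \<partial>PiM II MM)" .
  qed
  also have "\<dots> = (\<integral>\<^sup>+\<omega>. (\<Sum>j<n m. f (upd (t,m) j \<omega>)) / of_nat (n m) \<partial>Om)"
    by (rule Om_gen[OF avgm, symmetric])
  finally show ?thesis .
qed

end

lemma ennreal_avg:
  assumes "\<And>j. j < n \<Longrightarrow> a j \<ge> 0" "n > 0"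
  shows "(\<Sum>j<n. ennreal (a j)) / of_nat n = ennreal ((\<Sum>j<n. a j) / real n)"
proof -
  have "(\<Sum>j<n. ennreal (a j)) = ennreal (\<Sum>j<n. a j)"
    using assms by (intro sum_ennreal) auto
  moreover have "(of_nat n :: ennreal) = ennreal (real n)" by (simp add: ennreal_of_nat_eq_real_of_nat)
  ultimately show ?thesis using assms
    by (simp, subst divide_ennreal) (auto intro: sum_nonneg)
qed

context FA begin

definition "gs t k \<omega> = g (W t k \<omega>) (D k ! xic \<omega> t k)"
definition "gr t k \<omega> = local_grad g D k (W t k \<omega>)"
definition "U t \<omega> = Wb t \<omega> - eta t *\<^sub>R (\<Sum>k<N. p k *\<^sub>R gr t k \<omega>) - wstar"

lemma xic_upd:
  assumes "m < N" "j < n m"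
  shows "xic (upd (t,m) j \<omega>) s k = (if (s,k) = (t,m) then j else xic \<omega> s k)"
  using assms by (auto simp: xic_def upd_def)

lemma W_upd:
  assumes "m < N" "j < n m" "s \<le> t" "k < N"
  shows "W s k (upd (t,m) j \<omega>) = W s k \<omega>"
  unfolding W_def
proof -
  have "fst (upd (t,m) j \<omega>) = fst \<omega>" by (simp add: upd_def)
  moreover have "fedavg_w p N E eta sg (fst \<omega>) (xic (upd (t, m) j \<omega>)) s k = fedavg_w p N E eta sg (fst \<omega>) (xic \<omega>) s k"
    by (rule fw_cong) (use assms in \<open>auto simp: xic_upd\<close>)
  ultimately show "fedavg_w p N E eta sg (fst (upd (t, m) j \<omega>)) (xic (upd (t, m) j \<omega>)) s k = fedavg_w p N E eta sg (fst \<omega>) (xic \<omega>) s k"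
    by simp
qed

lemma Wb_upd:
  assumes "m < N" "j < n m" "s \<le> t"
  shows "Wb s (upd (t,m) j \<omega>) = Wb s \<omega>"
  unfolding Wb_def by (rule sum.cong) (auto simp: W_upd[OF assms])

lemma lgrad_meas: "k < N \<Longrightarrow> (\<lambda>w. local_grad g D k w) \<in> borel_measurable borel"
  unfolding local_grad_def
  by (intro borel_measurable_scaleR borel_measurable_const borel_measurable_sum g_meas) (auto simp: n_def)

lemma gr_meas[measurable]: "k < N \<Longrightarrow> gr t k \<in> borel_measurable Om"
  unfolding gr_def using measurable_compose[OF W_meas lgrad_meas] by blast

lemma gs_meas[measurable]: "k < N \<Longrightarrow> gs t k \<in> borel_measurable Om"
  unfolding gs_def by (intro gcomp_meas W_meas)

lemma Wb_meas[measurable]: "Wb t \<in> borel_measurable Om"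
  unfolding Wb_def by (intro borel_measurable_sum borel_measurable_scaleR borel_measurable_const W_meas) auto

lemma U_meas[measurable]: "U t \<in> borel_measurable Om"
  unfolding U_def by (intro borel_measurable_diff borel_measurable_scaleR borel_measurable_sum
      borel_measurable_const Wb_meas gr_meas) auto

lemma Wb_Suc:
  assumes "t \<ge> 1"
  shows "Wb (Suc t) \<omega> = Wb t \<omega> - eta t *\<^sub>R (\<Sum>k<N. p k *\<^sub>R gs t k \<omega>)"
proof -
  define v where "v j = W t j \<omega> - eta t *\<^sub>R gs t j \<omega>" for j
  have WS: "W (Suc t) k \<omega> = (if Suc t mod E = 0 then (\<Sum>j<N. p j *\<^sub>R v j) else v k)" for k
    using assms by (simp add: W_def v_def gs_def sg_def Let_def)
  have "Wb (Suc t) \<omega> = (\<Sum>k<N. p k *\<^sub>R v k)"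
  proof (cases "Suc t mod E = 0")
    case True
    then have "Wb (Suc t) \<omega> = (\<Sum>k<N. p k) *\<^sub>R (\<Sum>j<N. p j *\<^sub>R v j)"
      by (simp add: Wb_def WS scaleR_sum_left)
    then show ?thesis using p_sum by simp
  next
    case False
    then show ?thesis by (simp add: Wb_def WS)
  qed
  also have "\<dots> = Wb t \<omega> - eta t *\<^sub>R (\<Sum>k<N. p k *\<^sub>R gs t k \<omega>)"
    by (simp add: v_def Wb_def scaleR_diff_right sum_subtractf scaleR_sum_right mult.commute)
  finally show ?thesis .
qed

lemma decomp:
  assumes "t \<ge> 1"
  shows "Wb (Suc t) \<omega> - wstar = U t \<omega> - eta t *\<^sub>R (\<Sum>k<N. p k *\<^sub>R (gs t k \<omega> - gr t k \<omega>))"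
  using assms by (simp add: Wb_Suc U_def scaleR_diff_right sum_subtractf algebra_simps)

lemma gs_upd: "m < N \<Longrightarrow> j < n m \<Longrightarrow> k < N \<Longrightarrow> gs t k (upd (t,m) j \<omega>) = (if k = m then g (W t k \<omega>) (D k ! j) else gs t k \<omega>)"
  by (simp add: gs_def W_upd xic_upd)

lemma gr_upd: "m < N \<Longrightarrow> j < n m \<Longrightarrow> k < N \<Longrightarrow> gr t k (upd (t,m) j \<omega>) = gr t k \<omega>"
  by (simp add: gr_def W_upd)

lemma U_upd: "m < N \<Longrightarrow> j < n m \<Longrightarrow> U t (upd (t,m) j \<omega>) = U t \<omega>"
proof -
  assume a: "m < N" "j < n m"
  have "(\<Sum>k<N. p k *\<^sub>R gr t k (upd (t,m) j \<omega>)) = (\<Sum>k<N. p k *\<^sub>R gr t k \<omega>)"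
    by (rule sum.cong) (auto simp: gr_upd a)
  then show ?thesis unfolding U_def by (simp add: Wb_upd a)
qed

lemma gsum_zero: "k < N \<Longrightarrow> (\<Sum>j<n k. g (W t k \<omega>) (D k ! j) - gr t k \<omega>) = 0"
  using n_pos[of k] by (simp add: sum_subtractf gr_def local_grad_def n_def sum_constant_scaleR)

lemma Gz_meas: "k < N \<Longrightarrow> j < n k \<Longrightarrow> (\<lambda>\<omega>. g (W t k \<omega>) (D k ! j) - gr t k \<omega>) \<in> borel_measurable Om"
  by (intro borel_measurable_diff gr_meas measurable_compose[OF W_meas g_meas])

lemma var_step:
  assumes m: "m < N" and Xm[measurable]: "X \<in> borel_measurable Om"
    and Xu: "\<And>j \<omega>. j < n m \<Longrightarrow> X (upd (t,m) j \<omega>) = X \<omega>"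
  shows "(\<integral>\<^sup>+\<omega>. ennreal ((norm (X \<omega> - c *\<^sub>R (gs t m \<omega> - gr t m \<omega>)))\<^sup>2) \<partial>Om)
       = (\<integral>\<^sup>+\<omega>. ennreal ((norm (X \<omega>))\<^sup>2) \<partial>Om) + ennreal (c\<^sup>2) * (\<integral>\<^sup>+\<omega>. ennreal ((norm (gs t m \<omega> - gr t m \<omega>))\<^sup>2) \<partial>Om)"
proof -
  define Gz where "Gz \<omega> j = g (W t m \<omega>) (D m ! j) - gr t m \<omega>" for \<omega> :: "'a \<times> (nat \<times> nat \<Rightarrow> nat) \<times> 'r" and j
  define V where "V \<omega> = (\<Sum>j<n m. (norm (Gz \<omega> j))\<^sup>2) / real (n m)" for \<omega> :: "'a \<times> (nat \<times> nat \<Rightarrow> nat) \<times> 'r"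
  have np: "n m > 0" using n_pos[OF m] .
  have Vm[measurable]: "V \<in> borel_measurable Om"
  proof -
    have "(\<lambda>\<omega>. norm (Gz \<omega> j)) \<in> borel_measurable Om" if "j < n m" for j
      unfolding Gz_def using measurable_compose[OF Gz_meas[OF m that] borel_measurable_norm] by simp
    then show ?thesis unfolding V_def
      by (intro borel_measurable_divide borel_measurable_sum borel_measurable_power borel_measurable_const) auto
  qed
  have fm: "(\<lambda>\<omega>. ennreal ((norm (X \<omega> - c *\<^sub>R (gs t m \<omega> - gr t m \<omega>)))\<^sup>2)) \<in> borel_measurable Om"
    using gs_meas[OF m] gr_meas[OF m] by measurable
  have hm: "(\<lambda>\<omega>. ennreal ((norm (gs t m \<omega> - gr t m \<omega>))\<^sup>2)) \<in> borel_measurable Om"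
    using gs_meas[OF m] gr_meas[OF m] by measurable
  have "(\<integral>\<^sup>+\<omega>. ennreal ((norm (X \<omega> - c *\<^sub>R (gs t m \<omega> - gr t m \<omega>)))\<^sup>2) \<partial>Om)
      = (\<integral>\<^sup>+\<omega>. (\<Sum>j<n m. ennreal ((norm (X (upd (t,m) j \<omega>) - c *\<^sub>R (gs t m (upd (t,m) j \<omega>) - gr t m (upd (t,m) j \<omega>))))\<^sup>2)) / of_nat (n m) \<partial>Om)"
    by (rule avg_Om[OF m fm])
  also have "\<dots> = (\<integral>\<^sup>+\<omega>. ennreal ((norm (X \<omega>))\<^sup>2) + ennreal (c\<^sup>2) * ennreal (V \<omega>) \<partial>Om)"
  proof (rule nn_integral_cong)
    fix \<omega>
    have "(\<Sum>j<n m. ennreal ((norm (X (upd (t,m) j \<omega>) - c *\<^sub>R (gs t m (upd (t,m) j \<omega>) - gr t m (upd (t,m) j \<omega>))))\<^sup>2))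
        = (\<Sum>j<n m. ennreal ((norm (X \<omega> - c *\<^sub>R Gz \<omega> j))\<^sup>2))"
      by (rule sum.cong) (auto simp: Xu gs_upd[OF m] gr_upd[OF m] m Gz_def)
    also have "\<dots> / of_nat (n m) = ennreal ((\<Sum>j<n m. (norm (X \<omega> - c *\<^sub>R Gz \<omega> j))\<^sup>2) / real (n m))"
      by (rule ennreal_avg) (use np in auto)
    also have "(\<Sum>j<n m. (norm (X \<omega> - c *\<^sub>R Gz \<omega> j))\<^sup>2) / real (n m) = (norm (X \<omega>))\<^sup>2 + c\<^sup>2 * V \<omega>"
      unfolding V_def by (rule avg_identity[OF np]) (simp add: Gz_def gsum_zero[OF m])
    also have "ennreal \<dots> = ennreal ((norm (X \<omega>))\<^sup>2) + ennreal (c\<^sup>2) * ennreal (V \<omega>)"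
      by (simp add: ennreal_plus V_def divide_nonneg_nonneg sum_nonneg ennreal_mult'[symmetric])
    finally show "(\<Sum>j<n m. ennreal ((norm (X (upd (t,m) j \<omega>) - c *\<^sub>R (gs t m (upd (t,m) j \<omega>) - gr t m (upd (t,m) j \<omega>))))\<^sup>2)) / of_nat (n m)
        = ennreal ((norm (X \<omega>))\<^sup>2) + ennreal (c\<^sup>2) * ennreal (V \<omega>)" .
  qed
  also have "\<dots> = (\<integral>\<^sup>+\<omega>. ennreal ((norm (X \<omega>))\<^sup>2) \<partial>Om) + ennreal (c\<^sup>2) * (\<integral>\<^sup>+\<omega>. ennreal (V \<omega>) \<partial>Om)"
    by (subst nn_integral_add) (auto simp: nn_integral_cmult)
  also have "(\<integral>\<^sup>+\<omega>. ennreal (V \<omega>) \<partial>Om) = (\<integral>\<^sup>+\<omega>. ennreal ((norm (gs t m \<omega> - gr t m \<omega>))\<^sup>2) \<partial>Om)"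
  proof -
    have "(\<integral>\<^sup>+\<omega>. ennreal ((norm (gs t m \<omega> - gr t m \<omega>))\<^sup>2) \<partial>Om)
      = (\<integral>\<^sup>+\<omega>. (\<Sum>j<n m. ennreal ((norm (gs t m (upd (t,m) j \<omega>) - gr t m (upd (t,m) j \<omega>)))\<^sup>2)) / of_nat (n m) \<partial>Om)"
      by (rule avg_Om[OF m hm])
    also have "\<dots> = (\<integral>\<^sup>+\<omega>. ennreal (V \<omega>) \<partial>Om)"
    proof (rule nn_integral_cong)
      fix \<omega>
      have "(\<Sum>j<n m. ennreal ((norm (gs t m (upd (t,m) j \<omega>) - gr t m (upd (t,m) j \<omega>)))\<^sup>2))
          = (\<Sum>j<n m. ennreal ((norm (Gz \<omega> j))\<^sup>2))"
        by (rule sum.cong) (auto simp: gs_upd[OF m] gr_upd[OF m] m Gz_def)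
      then show "(\<Sum>j<n m. ennreal ((norm (gs t m (upd (t,m) j \<omega>) - gr t m (upd (t,m) j \<omega>)))\<^sup>2)) / of_nat (n m) = ennreal (V \<omega>)"
        unfolding V_def using ennreal_avg[of "n m" "\<lambda>j. (norm (Gz \<omega> j))\<^sup>2"] np by simp
    qed
    finally show ?thesis ..
  qed
  finally show ?thesis .
qed

lemma var_sum:
  assumes "m \<le> N"
  shows "(\<integral>\<^sup>+\<omega>. ennreal ((norm (U t \<omega> - eta t *\<^sub>R (\<Sum>k<m. p k *\<^sub>R (gs t k \<omega> - gr t k \<omega>))))\<^sup>2) \<partial>Om)
       = (\<integral>\<^sup>+\<omega>. ennreal ((norm (U t \<omega>))\<^sup>2) \<partial>Om)
         + (\<Sum>k<m. ennreal ((eta t * p k)\<^sup>2) * (\<integral>\<^sup>+\<omega>. ennreal ((norm (gs t k \<omega> - gr t k \<omega>))\<^sup>2) \<partial>Om))"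
  using assms
proof (induction m)
  case 0 then show ?case by simp
next
  case (Suc m)
  have m: "m < N" using Suc.prems by simp
  define X where "X \<omega> = U t \<omega> - eta t *\<^sub>R (\<Sum>k<m. p k *\<^sub>R (gs t k \<omega> - gr t k \<omega>))" for \<omega> :: "'a \<times> (nat \<times> nat \<Rightarrow> nat) \<times> 'r"
  have Xm: "X \<in> borel_measurable Om"
    unfolding X_def using m
    by (intro borel_measurable_diff borel_measurable_scaleR borel_measurable_sum
      borel_measurable_const U_meas gs_meas gr_meas) auto
  have Xu: "X (upd (t,m) j \<omega>) = X \<omega>" if "j < n m" for j \<omega>
    unfolding X_def using that m
    by (auto simp: U_upd gs_upd gr_upd intro!: sum.cong arg_cong2[where f="(-)"] arg_cong2[where f=scaleR])
  have eq: "U t \<omega> - eta t *\<^sub>R (\<Sum>k<Suc m. p k *\<^sub>R (gs t k \<omega> - gr t k \<omega>)) = X \<omega> - (eta t * p m) *\<^sub>R (gs t m \<omega> - gr t m \<omega>)" for \<omega>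
    by (simp add: X_def algebra_simps)
  have "(\<integral>\<^sup>+\<omega>. ennreal ((norm (U t \<omega> - eta t *\<^sub>R (\<Sum>k<Suc m. p k *\<^sub>R (gs t k \<omega> - gr t k \<omega>))))\<^sup>2) \<partial>Om)
     = (\<integral>\<^sup>+\<omega>. ennreal ((norm (X \<omega> - (eta t * p m) *\<^sub>R (gs t m \<omega> - gr t m \<omega>)))\<^sup>2) \<partial>Om)"
    by (simp only: eq)
  also have "\<dots> = (\<integral>\<^sup>+\<omega>. ennreal ((norm (X \<omega>))\<^sup>2) \<partial>Om) + ennreal ((eta t * p m)\<^sup>2) * (\<integral>\<^sup>+\<omega>. ennreal ((norm (gs t m \<omega> - gr t m \<omega>))\<^sup>2) \<partial>Om)"
    by (rule var_step[OF m Xm Xu])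
  also have "(\<integral>\<^sup>+\<omega>. ennreal ((norm (X \<omega>))\<^sup>2) \<partial>Om) = (\<integral>\<^sup>+\<omega>. ennreal ((norm (U t \<omega>))\<^sup>2) \<partial>Om)
         + (\<Sum>k<m. ennreal ((eta t * p k)\<^sup>2) * (\<integral>\<^sup>+\<omega>. ennreal ((norm (gs t k \<omega> - gr t k \<omega>))\<^sup>2) \<partial>Om))"
    unfolding X_def by (rule Suc.IH) (use Suc.prems in simp)
  finally show ?case by (simp add: add.assoc)
qed

end

lemma var_identity:
  fixes v :: "nat \<Rightarrow> 'a::real_inner"
  assumes "(\<Sum>k<N. p k) = 1"
  shows "(\<Sum>k<N. p k * (norm (v k - c))\<^sup>2) = (\<Sum>k<N. p k * (norm (v k - (\<Sum>j<N. p j *\<^sub>R v j)))\<^sup>2) + (norm ((\<Sum>j<N. p j *\<^sub>R v j) - c))\<^sup>2"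
proof -
  define vb where "vb = (\<Sum>j<N. p j *\<^sub>R v j)"
  have e: "(norm (v k - c))\<^sup>2 = (norm (v k - vb))\<^sup>2 + 2 * ((v k - vb) \<bullet> (vb - c)) + (norm (vb - c))\<^sup>2" for k
  proof -
    have "v k - c = (v k - vb) + (vb - c)" by simp
    then have "(norm (v k - c))\<^sup>2 = (norm ((v k - vb) + (vb - c)))\<^sup>2" by metis
    also have "\<dots> = (norm (v k - vb))\<^sup>2 + 2 * ((v k - vb) \<bullet> (vb - c)) + (norm (vb - c))\<^sup>2"
      using dot_norm[of "v k - vb" "vb - c"] by simp
    finally show ?thesis .
  qed
  have z: "(\<Sum>k<N. p k * ((v k - vb) \<bullet> (vb - c))) = 0"
  proof -
    have "(\<Sum>k<N. p k * ((v k - vb) \<bullet> (vb - c))) = (\<Sum>k<N. (p k *\<^sub>R (v k - vb))) \<bullet> (vb - c)"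
      by (simp add: inner_sum_left)
    also have "(\<Sum>k<N. (p k *\<^sub>R (v k - vb))) = vb - (\<Sum>k<N. p k) *\<^sub>R vb"
      by (simp add: vb_def scaleR_diff_right sum_subtractf scaleR_sum_left)
    finally show ?thesis using assms by simp
  qed
  have "(\<Sum>k<N. p k * (norm (v k - c))\<^sup>2) = (\<Sum>k<N. p k * (norm (v k - vb))\<^sup>2) + 2 * (\<Sum>k<N. p k * ((v k - vb) \<bullet> (vb - c))) + (\<Sum>k<N. p k) * (norm (vb - c))\<^sup>2"
  proof -
    have pk: "p k * (norm (v k - c))\<^sup>2 = p k * (norm (v k - vb))\<^sup>2 + 2 * (p k * ((v k - vb) \<bullet> (vb - c))) + p k * (norm (vb - c))\<^sup>2" for k
      by (simp only: e) (simp only: algebra_simps)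
    show ?thesis unfolding pk by (simp only: sum.distrib sum_distrib_left sum_distrib_right)
  qed
  then show ?thesis using z assms by (simp add: vb_def)
qed

lemma grad_sq_bound:
  fixes F :: "'a::real_inner \<Rightarrow> real"
  assumes A1': "\<forall>v u. F v \<le> F u + (v - u) \<bullet> Gr u + L / 2 * (norm (v - u))\<^sup>2"
    and L: "L > 0" and Fsb: "\<forall>v. Fs \<le> F v"
  shows "(norm (Gr u))\<^sup>2 \<le> 2 * L * (F u - Fs)"
proof -
  define v where "v = u - (1 / L) *\<^sub>R Gr u"
  have i: "(v - u) \<bullet> Gr u = - (1 / L) * (norm (Gr u))\<^sup>2"
    by (simp add: v_def power2_norm_eq_inner)
  have nn: "(norm (v - u))\<^sup>2 = (1 / L)\<^sup>2 * (norm (Gr u))\<^sup>2"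
    using L by (simp add: v_def power_divide)
  have "Fs \<le> F u - (1 / L) * (norm (Gr u))\<^sup>2 + L / 2 * ((1 / L)\<^sup>2 * (norm (Gr u))\<^sup>2)"
  proof -
    have "F v \<le> F u + - (1 / L) * (norm (Gr u))\<^sup>2 + L / 2 * ((1 / L)\<^sup>2 * (norm (Gr u))\<^sup>2)"
      using A1'[rule_format, of v u] unfolding i nn .
    then show ?thesis using Fsb[rule_format, of v] by linarith
  qed
  also have "L / 2 * ((1 / L)\<^sup>2 * (norm (Gr u))\<^sup>2) = (1 / (2 * L)) * (norm (Gr u))\<^sup>2"
    using L by (simp add: power2_eq_square field_simps)
  finally have "Fs \<le> F u - (1 / (2 * L)) * (norm (Gr u))\<^sup>2"
    using L by (simp add: field_simps)
  then show ?thesis using L by (simp add: field_simps)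
qed

lemma lemma1:
  fixes w :: "nat \<Rightarrow> 'a::real_inner" and F :: "nat \<Rightarrow> 'a \<Rightarrow> real" and Gr :: "nat \<Rightarrow> 'a \<Rightarrow> 'a"
  assumes p_nonneg: "\<forall>k<N. p k \<ge> 0" and p_sum: "(\<Sum>k<N. p k) = 1"
    and A1': "\<forall>k<N. \<forall>v u. F k v \<le> F k u + (v - u) \<bullet> Gr k u + L / 2 * (norm (v - u))\<^sup>2"
    and A2': "\<forall>k<N. \<forall>v u. F k v \<ge> F k u + (v - u) \<bullet> Gr k u + mu / 2 * (norm (v - u))\<^sup>2"
    and Fsb: "\<forall>k<N. \<forall>v. Fs k \<le> F k v"
    and wmin: "\<forall>v. (\<Sum>k<N. p k * F k ws) \<le> (\<Sum>k<N. p k * F k v)"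
    and L: "L > 0" and mu: "mu > 0" and et: "eta > 0" "4 * L * eta \<le> 1"
  shows "(norm ((\<Sum>k<N. p k *\<^sub>R w k) - eta *\<^sub>R (\<Sum>k<N. p k *\<^sub>R Gr k (w k)) - ws))\<^sup>2
     \<le> (1 - mu * eta) * (norm ((\<Sum>k<N. p k *\<^sub>R w k) - ws))\<^sup>2
       + 2 * (\<Sum>k<N. p k * (norm ((\<Sum>j<N. p j *\<^sub>R w j) - w k))\<^sup>2)
       + 6 * L * eta\<^sup>2 * ((\<Sum>k<N. p k * F k ws) - (\<Sum>k<N. p k * Fs k))"
proof -
  define wb where "wb = (\<Sum>k<N. p k *\<^sub>R w k)"
  define gg where "gg k = Gr k (w k)" for k
  define gb where "gb = (\<Sum>k<N. p k *\<^sub>R gg k)"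
  define a where "a = (norm (wb - ws))\<^sup>2"
  define b where "b = (\<Sum>k<N. p k * (norm (wb - w k))\<^sup>2)"
  define c where "c = (\<Sum>k<N. p k * (norm (gg k))\<^sup>2)"
  define d where "d = (\<Sum>k<N. p k * (norm (w k - ws))\<^sup>2)"
  define Fw where "Fw = (\<Sum>k<N. p k * F k (w k))"
  define Fst where "Fst = (\<Sum>k<N. p k * F k ws)"
  define Fsm where "Fsm = (\<Sum>k<N. p k * Fs k)"
  define Y where "Y = (\<Sum>k<N. p k * ((wb - w k) \<bullet> gg k))"
  define Z where "Z = (\<Sum>k<N. p k * ((w k - ws) \<bullet> gg k))"
  define gbn where "gbn = (norm gb)\<^sup>2"
  define Ga where "Ga = Fst - Fsm"
  have f1: "(norm (wb - eta *\<^sub>R gb - ws))\<^sup>2 = a - 2 * eta * ((wb - ws) \<bullet> gb) + eta\<^sup>2 * gbn"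
  proof -
    have "wb - eta *\<^sub>R gb - ws = (wb - ws) - eta *\<^sub>R gb" by simp
    then show ?thesis unfolding a_def gbn_def power2_norm_eq_inner
      by (simp add: inner_diff_left inner_diff_right inner_commute power2_eq_square algebra_simps)
  qed
  have f1b: "(wb - ws) \<bullet> gb = Y + Z"
  proof -
    have "(wb - ws) \<bullet> gb = (\<Sum>k<N. p k * ((wb - ws) \<bullet> gg k))"
      by (simp add: gb_def inner_sum_right)
    also have "\<dots> = Y + Z"
      unfolding Y_def Z_def sum.distrib[symmetric]
      by (rule sum.cong) (auto simp: inner_diff_left algebra_simps)
    finally show ?thesis .
  qed
  have f2: "- 2 * eta * Y \<le> b + eta\<^sup>2 * c"
  proof -
    have pk: "p k * (- 2 * eta * ((wb - w k) \<bullet> gg k)) \<le> p k * ((norm (wb - w k))\<^sup>2 + eta\<^sup>2 * (norm (gg k))\<^sup>2)" if k: "k < N" for k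
    proof (rule mult_left_mono)
      have "0 \<le> (norm ((wb - w k) + eta *\<^sub>R gg k))\<^sup>2" by simp
      also have "\<dots> = (norm (wb - w k))\<^sup>2 + 2 * eta * ((wb - w k) \<bullet> gg k) + eta\<^sup>2 * (norm (gg k))\<^sup>2"
        unfolding power2_norm_eq_inner
        by (simp add: inner_add_left inner_add_right inner_commute power2_eq_square algebra_simps)
      finally show "- 2 * eta * ((wb - w k) \<bullet> gg k) \<le> (norm (wb - w k))\<^sup>2 + eta\<^sup>2 * (norm (gg k))\<^sup>2" by simp
    qed (use p_nonneg k in auto)
    have "- 2 * eta * Y = (\<Sum>k<N. p k * (- 2 * eta * ((wb - w k) \<bullet> gg k)))"
      unfolding Y_def by (simp add: sum_distrib_left algebra_simps)
    also have "\<dots> \<le> (\<Sum>k<N. p k * ((norm (wb - w k))\<^sup>2 + eta\<^sup>2 * (norm (gg k))\<^sup>2))"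
      by (rule sum_mono) (use pk in auto)
    also have "\<dots> = b + eta\<^sup>2 * c"
      unfolding b_def c_def by (simp add: sum_distrib_left sum.distrib algebra_simps)
    finally show ?thesis .
  qed
  have f3: "- 2 * eta * Z \<le> - 2 * eta * (Fw - Fst) - mu * eta * d"
  proof -
    have pk: "p k * (F k (w k) - F k ws + mu / 2 * (norm (w k - ws))\<^sup>2) \<le> p k * ((w k - ws) \<bullet> gg k)" if k: "k < N" for k
    proof (rule mult_left_mono)
      have "F k ws \<ge> F k (w k) + (ws - w k) \<bullet> gg k + mu / 2 * (norm (ws - w k))\<^sup>2"
        using A2' k unfolding gg_def by blast
      moreover have "(ws - w k) \<bullet> gg k = - ((w k - ws) \<bullet> gg k)" by (simp add: inner_diff_left)
      moreover have "norm (ws - w k) = norm (w k - ws)" by (rule norm_minus_commute)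
      ultimately show "F k (w k) - F k ws + mu / 2 * (norm (w k - ws))\<^sup>2 \<le> (w k - ws) \<bullet> gg k" by simp
    qed (use p_nonneg k in auto)
    have "Fw - Fst + mu / 2 * d = (\<Sum>k<N. p k * (F k (w k) - F k ws + mu / 2 * (norm (w k - ws))\<^sup>2))"
      unfolding Fw_def Fst_def d_def by (simp add: sum_distrib_left sum.distrib sum_subtractf algebra_simps)
    also have "\<dots> \<le> Z" unfolding Z_def by (rule sum_mono) (use pk in auto)
    finally have "Fw - Fst + mu / 2 * d \<le> Z" .
    then have "2 * eta * (Fw - Fst + mu / 2 * d) \<le> 2 * eta * Z" using et by simp
    then show ?thesis by (simp add: algebra_simps)
  qed
  have f4: "gbn \<le> c"
  proof -
    have "(\<Sum>k<N. p k * (norm (gg k - 0))\<^sup>2) = (\<Sum>k<N. p k * (norm (gg k - gb))\<^sup>2) + (norm (gb - 0))\<^sup>2"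
      unfolding gb_def by (rule var_identity[OF p_sum])
    moreover have "(\<Sum>k<N. p k * (norm (gg k - gb))\<^sup>2) \<ge> 0"
      using p_nonneg by (intro sum_nonneg) auto
    ultimately show ?thesis unfolding c_def gbn_def by simp
  qed
  have f5: "a \<le> d"
  proof -
    have "(\<Sum>k<N. p k * (norm (w k - ws))\<^sup>2) = (\<Sum>k<N. p k * (norm (w k - wb))\<^sup>2) + (norm (wb - ws))\<^sup>2"
      unfolding wb_def by (rule var_identity[OF p_sum])
    moreover have "(\<Sum>k<N. p k * (norm (w k - wb))\<^sup>2) \<ge> 0"
      using p_nonneg by (intro sum_nonneg) auto
    ultimately show ?thesis unfolding a_def d_def by simp
  qed
  have f6: "c \<le> 2 * L * (Fw - Fsm)"
  proof -
    have "c \<le> (\<Sum>k<N. p k * (2 * L * (F k (w k) - Fs k)))"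
      unfolding c_def gg_def
      by (rule sum_mono, rule mult_left_mono, rule grad_sq_bound[OF _ L])
         (use A1' Fsb p_nonneg in auto)
    also have "\<dots> = 2 * L * (Fw - Fsm)"
      unfolding Fw_def Fsm_def by (simp add: sum_distrib_left sum_subtractf algebra_simps)
    finally show ?thesis .
  qed
  have f7: "Fw \<ge> Fst - eta * L * Ga - b / (2 * eta)"
  proof -
    have pk: "p k * F k (w k) \<ge> p k * ((1 - eta * L) * F k wb + eta * L * Fs k - (1 / (2 * eta)) * (norm (wb - w k))\<^sup>2)" if k: "k < N" for k
    proof (rule mult_left_mono)
      define h where "h = Gr k wb"
      have s1: "F k (w k) \<ge> F k wb + (w k - wb) \<bullet> h"
      proof -
        have "F k (w k) \<ge> F k wb + (w k - wb) \<bullet> h + mu / 2 * (norm (w k - wb))\<^sup>2"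
          using A2' k unfolding h_def by blast
        moreover have "mu / 2 * (norm (w k - wb))\<^sup>2 \<ge> 0" using mu by simp
        ultimately show ?thesis by linarith
      qed
      have s2: "2 * eta * ((w k - wb) \<bullet> h) \<ge> - eta\<^sup>2 * (norm h)\<^sup>2 - (norm (w k - wb))\<^sup>2"
      proof -
        have "0 \<le> (norm (eta *\<^sub>R h + (w k - wb)))\<^sup>2" by simp
        also have "\<dots> = eta\<^sup>2 * (norm h)\<^sup>2 + 2 * eta * ((w k - wb) \<bullet> h) + (norm (w k - wb))\<^sup>2"
          unfolding power2_norm_eq_inner
          by (simp add: inner_add_left inner_add_right inner_commute power2_eq_square algebra_simps)
        finally show ?thesis by simp
      qed
      have s3: "(norm h)\<^sup>2 \<le> 2 * L * (F k wb - Fs k)"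
        unfolding h_def by (rule grad_sq_bound[OF _ L]) (use A1' Fsb k in auto)
      have s2': "(w k - wb) \<bullet> h \<ge> - (eta / 2) * (norm h)\<^sup>2 - (1 / (2 * eta)) * (norm (w k - wb))\<^sup>2"
        using s2 et by (simp add: field_simps power2_eq_square)
      have s3': "(eta / 2) * (norm h)\<^sup>2 \<le> (eta / 2) * (2 * L * (F k wb - Fs k))"
        using s3 et by (intro mult_left_mono) auto
      have nm: "norm (w k - wb) = norm (wb - w k)" by (rule norm_minus_commute)
      show "(1 - eta * L) * F k wb + eta * L * Fs k - 1 / (2 * eta) * (norm (wb - w k))\<^sup>2 \<le> F k (w k)"
        using s1 s2' s3' nm by (simp add: algebra_simps)
    qed (use p_nonneg k in auto)
    have "(1 - eta * L) * (\<Sum>k<N. p k * F k wb) + eta * L * Fsm - (1 / (2 * eta)) * b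
        = (\<Sum>k<N. p k * ((1 - eta * L) * F k wb + eta * L * Fs k - (1 / (2 * eta)) * (norm (wb - w k))\<^sup>2))"
      unfolding Fsm_def b_def by (simp add: sum_distrib_left sum_subtractf sum.distrib algebra_simps)
    also have "\<dots> \<le> Fw" unfolding Fw_def by (rule sum_mono) (use pk in auto)
    finally have A: "(1 - eta * L) * (\<Sum>k<N. p k * F k wb) + eta * L * Fsm - (1 / (2 * eta)) * b \<le> Fw" .
    have "(1 - eta * L) * Fst \<le> (1 - eta * L) * (\<Sum>k<N. p k * F k wb)"
    proof -
      have "eta * L \<le> 4 * L * eta" using et L by simp
      then have el: "0 \<le> 1 - eta * L" using et by linarith
      show ?thesis using wmin el unfolding Fst_def by (intro mult_left_mono) auto
    qed
    with A show ?thesis unfolding Ga_def by (simp add: algebra_simps)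
  qed
  have f8: "Ga \<ge> 0"
  proof -
    have "Fsm \<le> Fst" unfolding Fsm_def Fst_def
      by (rule sum_mono, rule mult_left_mono) (use Fsb p_nonneg in auto)
    then show ?thesis unfolding Ga_def by simp
  qed
  have b0: "b \<ge> 0" unfolding b_def using p_nonneg by (intro sum_nonneg) auto
  have g1: "eta\<^sup>2 * gbn \<le> eta\<^sup>2 * c" using f4 by (intro mult_left_mono) auto
  have g2: "mu * eta * a \<le> mu * eta * d" using f5 mu et by (intro mult_left_mono) auto
  have g3: "2 * eta\<^sup>2 * c \<le> 2 * eta\<^sup>2 * (2 * L * (Fw - Fsm))" using f6 by (intro mult_left_mono) auto
  have pos: "2 * eta - 4 * L * eta\<^sup>2 \<ge> 0"
  proof -
    have "4 * L * eta\<^sup>2 = eta * (4 * L * eta)" by (simp add: power2_eq_square)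
    also have "\<dots> \<le> eta * 1" using et by (intro mult_left_mono) auto
    finally have "4 * L * eta\<^sup>2 \<le> eta" by simp
    then show ?thesis using et by linarith
  qed
  have g4: "(2 * eta - 4 * L * eta\<^sup>2) * (Fst - Fw) \<le> (2 * eta - 4 * L * eta\<^sup>2) * (eta * L * Ga + b / (2 * eta))"
    using f7 pos by (intro mult_left_mono) auto
  have g5: "(2 * eta - 4 * L * eta\<^sup>2) * (eta * L * Ga + b / (2 * eta)) = 2 * eta\<^sup>2 * L * Ga + b - 4 * L\<^sup>2 * eta ^ 3 * Ga - 2 * L * eta * b"
    using et by (simp add: field_simps power2_eq_square power3_eq_cube)
  have g6: "4 * L\<^sup>2 * eta ^ 3 * Ga \<ge> 0" "2 * L * eta * b \<ge> 0"
    using L et f8 b0 by auto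
  have main: "(norm (wb - eta *\<^sub>R gb - ws))\<^sup>2 \<le> (1 - mu * eta) * a + 2 * b + 6 * L * eta\<^sup>2 * Ga"
  proof -
    have "(norm (wb - eta *\<^sub>R gb - ws))\<^sup>2 = a - 2 * eta * Y - 2 * eta * Z + eta\<^sup>2 * gbn"
      using f1 f1b by (simp add: algebra_simps)
    also have "\<dots> \<le> a + b + 2 * eta\<^sup>2 * c - 2 * eta * (Fw - Fst) - mu * eta * a"
      using f2 f3 g1 g2 by (simp add: algebra_simps)
    also have "\<dots> \<le> a + b + 2 * eta\<^sup>2 * (2 * L * (Fw - Fsm)) - 2 * eta * (Fw - Fst) - mu * eta * a"
      using g3 by simp
    also have "\<dots> = (1 - mu * eta) * a + b + (2 * eta - 4 * L * eta\<^sup>2) * (Fst - Fw) + 4 * L * eta\<^sup>2 * Ga"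
      unfolding Ga_def by (simp add: algebra_simps)
    also have "\<dots> \<le> (1 - mu * eta) * a + b + (2 * eta\<^sup>2 * L * Ga + b - 4 * L\<^sup>2 * eta ^ 3 * Ga - 2 * L * eta * b) + 4 * L * eta\<^sup>2 * Ga"
      using g4 g5 by linarith
    also have "\<dots> \<le> (1 - mu * eta) * a + 2 * b + 6 * L * eta\<^sup>2 * Ga"
      using g6 by (simp add: algebra_simps)
    finally show ?thesis .
  qed
  have bb: "b = (\<Sum>k<N. p k * (norm ((\<Sum>j<N. p j *\<^sub>R w j) - w k))\<^sup>2)" unfolding b_def wb_def ..
  show ?thesis using main unfolding wb_def gb_def gg_def a_def Ga_def Fst_def Fsm_def bb[symmetric] by simp
qed

lemma cs_vec:
  fixes v :: "nat \<Rightarrow> 'a::real_inner"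
  shows "(norm (\<Sum>i<d. v i))\<^sup>2 \<le> real d * (\<Sum>i<d. (norm (v i))\<^sup>2)"
proof (cases "d = 0")
  case True then show ?thesis by simp
next
  case False
  then have dp: "real d > 0" by simp
  have s1: "(\<Sum>i<d. (1 / real d :: real)) = 1" using dp by simp
  have "(\<Sum>i<d. (1 / real d) * (norm (v i - 0))\<^sup>2) = (\<Sum>i<d. (1 / real d) * (norm (v i - (\<Sum>j<d. (1 / real d) *\<^sub>R v j)))\<^sup>2) + (norm ((\<Sum>j<d. (1 / real d) *\<^sub>R v j) - 0))\<^sup>2"
    by (rule var_identity[where p="\<lambda>_. 1 / real d", OF s1])
  moreover have "(\<Sum>i<d. (1 / real d) * (norm (v i - (\<Sum>j<d. (1 / real d) *\<^sub>R v j)))\<^sup>2) \<ge> 0"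
    by (intro sum_nonneg) auto
  ultimately have A: "(norm ((1 / real d) *\<^sub>R (\<Sum>j<d. v j)))\<^sup>2 \<le> (1 / real d) * (\<Sum>i<d. (norm (v i))\<^sup>2)"
    by (simp add: scaleR_sum_right[symmetric] sum_distrib_left)
  have "(norm ((1 / real d) *\<^sub>R (\<Sum>j<d. v j)))\<^sup>2 = (norm (\<Sum>j<d. v j))\<^sup>2 / (real d)\<^sup>2"
    using dp by (simp add: power_divide)
  with A have "(norm (\<Sum>j<d. v j))\<^sup>2 / (real d)\<^sup>2 \<le> (1 / real d) * (\<Sum>i<d. (norm (v i))\<^sup>2)" by simp
  then show ?thesis using dp by (simp add: field_simps power2_eq_square)
qed

context FA begin

lemma W_1: "W (Suc 0) k \<omega> = fst \<omega>"
  by (simp add: W_def)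

lemma Wb_1: "Wb (Suc 0) \<omega> = fst \<omega>"
  by (simp add: Wb_def W_1 scaleR_sum_left[symmetric] p_sum)

lemma W_sync:
  assumes "Suc s mod E = 0" "k < N"
  shows "W (Suc s) k \<omega> = Wb (Suc s) \<omega>"
proof (cases "s = 0")
  case True then show ?thesis by (simp add: W_1 Wb_1)
next
  case False
  define V where "V = (\<Sum>j<N. p j *\<^sub>R (W s j \<omega> - eta s *\<^sub>R gs s j \<omega>))"
  have "\<And>k. W (Suc s) k \<omega> = V"
    using False assms(1) by (simp add: W_def V_def gs_def sg_def Let_def)
  then show ?thesis by (simp add: Wb_def scaleR_sum_left[symmetric] p_sum)
qed

lemma W_local:
  assumes "s \<ge> 1" "Suc s mod E \<noteq> 0"
  shows "W (Suc s) k \<omega> = W s k \<omega> - eta s *\<^sub>R gs s k \<omega>"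
  using assms by (simp add: W_def gs_def sg_def Let_def)

lemma W_unroll:
  assumes "t0 \<ge> 1" "\<forall>i<d. Suc (t0 + i) mod E \<noteq> 0"
  shows "W (t0 + d) k \<omega> = W t0 k \<omega> - (\<Sum>i<d. eta (t0 + i) *\<^sub>R gs (t0 + i) k \<omega>)"
  using assms
proof (induction d)
  case 0 then show ?case by simp
next
  case (Suc d)
  have "W (t0 + Suc d) k \<omega> = W (Suc (t0 + d)) k \<omega>" by simp
  also have "\<dots> = W (t0 + d) k \<omega> - eta (t0 + d) *\<^sub>R gs (t0 + d) k \<omega>"
    by (rule W_local) (use Suc.prems in auto)
  also have "W (t0 + d) k \<omega> = W t0 k \<omega> - (\<Sum>i<d. eta (t0 + i) *\<^sub>R gs (t0 + i) k \<omega>)"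
    by (rule Suc.IH) (use Suc.prems in auto)
  finally show ?case by simp
qed

definition "tz t = (if t < E then 1 else E * (t div E))"

lemma tz_props:
  assumes "t \<ge> 1"
  shows "tz t \<ge> 1" "tz t \<le> t" "t - tz t \<le> E - 1"
    "\<forall>i<t - tz t. Suc (tz t + i) mod E \<noteq> 0"
    "\<forall>k<N. W (tz t) k \<omega> = Wb (tz t) \<omega>"
proof -
  have E1: "E \<ge> 1" using E_pos .
  show "tz t \<ge> 1"
  proof -
    have "\<not> t < E \<Longrightarrow> 1 \<le> t div E" using E1 by (simp add: div_greater_zero_iff Suc_le_eq)
    then show ?thesis using E1 by (auto simp: tz_def)
  qed
  show "tz t \<le> t" using assms by (auto simp: tz_def)
  show "t - tz t \<le> E - 1"
  proof (cases "t < E")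
    case True then show ?thesis using assms by (simp add: tz_def)
  next
    case False
    have "t - E * (t div E) = t mod E" by (metis minus_mult_div_eq_mod)
    moreover have "t mod E < E" using E1 by simp
    ultimately show ?thesis using False by (simp add: tz_def)
  qed
  show "\<forall>i<t - tz t. Suc (tz t + i) mod E \<noteq> 0"
  proof (intro allI impI)
    fix i assume i: "i < t - tz t"
    show "Suc (tz t + i) mod E \<noteq> 0"
    proof (cases "t < E")
      case True
      then have "Suc (tz t + i) < E + 1" "Suc (tz t + i) > 0" using i by (auto simp: tz_def)
      moreover have "Suc (tz t + i) \<le> t" using i \<open>tz t \<le> t\<close> by linarith
      ultimately show ?thesis using True by auto
    next
      case False
      define q where "q = t div E"
      have tq: "tz t = E * q" using False by (simp add: tz_def q_def)
      have lt: "Suc (tz t + i) \<le> t" using i \<open>tz t \<le> t\<close> by linarith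
      have "t < E * q + E" using E1 unfolding q_def
        by (metis add.commute div_mult_mod_eq mod_less_divisor nat_add_left_cancel_less mult.commute zero_less_iff_neq_zero not_one_le_zero)
      then have "E * q + Suc i < E * q + E" using lt tq by simp
      then have "Suc i < E" by simp
      then have "Suc (E * q + i) mod E = Suc i" by (simp add: mod_mult_self3[symmetric] add.commute)
      then show ?thesis using tq by simp
    qed
  qed
  show "\<forall>k<N. W (tz t) k \<omega> = Wb (tz t) \<omega>"
  proof (intro allI impI)
    fix k assume k: "k < N"
    show "W (tz t) k \<omega> = Wb (tz t) \<omega>"
    proof (cases "t < E")
      case True then show ?thesis by (simp add: tz_def W_1 Wb_1)
    next
      case False
      have "tz t \<ge> 1" by fact
      then obtain s where s: "tz t = Suc s" by (cases "tz t") auto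
      have "Suc s mod E = 0" using False s by (metis mod_mult_self1_is_0 mult.commute tz_def)
      then show ?thesis using W_sync[OF _ k] s by simp
    qed
  qed
qed

lemma gam_ge: "gam \<ge> real E" "gam \<ge> 8 * L / mu" "gam \<ge> 1"
  using E_pos by (auto simp: gam_def)

lemma eta_eq: "eta s = 2 / (mu * (gam + real s))"
  by (simp add: eta_def gam_def)

lemma eta_pos: "eta s > 0"
  using gam_ge(3) mu_pos by (simp add: eta_eq)

lemma eta_mono: "s \<le> s' \<Longrightarrow> eta s' \<le> eta s"
  using gam_ge(3) mu_pos by (simp add: eta_eq frac_le mult_left_mono)

lemma eta_tz: "t \<ge> 1 \<Longrightarrow> eta (tz t) \<le> 2 * eta t"
proof -
  assume t: "t \<ge> 1"
  have d: "real t \<le> real (tz t) + (real E - 1)" using tz_props(3)[OF t] tz_props(2)[OF t] E_pos by linarith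
  have "real (tz t) \<ge> 0" by simp
  then have "gam + real t \<le> 2 * (gam + real (tz t))" using d gam_ge(1) by (smt (verit))
  then have m: "mu * ((gam + real t) / 2) \<le> mu * (gam + real (tz t))"
    using mu_pos by (intro mult_left_mono) auto
  have pos: "0 < mu * ((gam + real t) / 2)" using mu_pos gam_ge(3) by simp
  have "2 / (mu * (gam + real (tz t))) \<le> 2 / (mu * ((gam + real t) / 2))"
    by (rule divide_left_mono[OF m]) (use pos m in auto)
  also have "\<dots> = 2 * (2 / (mu * (gam + real t)))" by simp
  finally have "2 / (mu * (gam + real (tz t))) \<le> 2 * (2 / (mu * (gam + real t)))" .
  then show ?thesis by (simp add: eta_eq)
qed

lemma div_pw:
  assumes t: "t \<ge> 1"
  shows "(\<Sum>k<N. p k * (norm (Wb t \<omega> - W t k \<omega>))\<^sup>2)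
     \<le> (\<Sum>k<N. \<Sum>i<t - tz t. p k * (real E - 1) * (eta (tz t))\<^sup>2 * (norm (gs (tz t + i) k \<omega>))\<^sup>2)"
proof -
  define t0 where "t0 = tz t"
  define d where "d = t - t0"
  have tt: "t = t0 + d" using tz_props(2)[OF t] by (simp add: d_def t0_def)
  have dE: "real d \<le> real E - 1" using tz_props(3)[OF t] E_pos unfolding d_def t0_def by linarith
  have t01: "t0 \<ge> 1" using tz_props(1)[OF t] by (simp add: t0_def)
  have "(\<Sum>k<N. p k * (norm (W t k \<omega> - Wb t0 \<omega>))\<^sup>2) = (\<Sum>k<N. p k * (norm (W t k \<omega> - Wb t \<omega>))\<^sup>2) + (norm (Wb t \<omega> - Wb t0 \<omega>))\<^sup>2"
    unfolding Wb_def[of t] by (rule var_identity[OF p_sum])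
  then have A: "(\<Sum>k<N. p k * (norm (Wb t \<omega> - W t k \<omega>))\<^sup>2) \<le> (\<Sum>k<N. p k * (norm (W t k \<omega> - Wb t0 \<omega>))\<^sup>2)"
    by (simp add: norm_minus_commute)
  have B: "p k * (norm (W t k \<omega> - Wb t0 \<omega>))\<^sup>2 \<le> (\<Sum>i<d. p k * (real E - 1) * (eta t0)\<^sup>2 * (norm (gs (t0 + i) k \<omega>))\<^sup>2)" if k: "k < N" for k
  proof -
    have "W t k \<omega> = W t0 k \<omega> - (\<Sum>i<d. eta (t0 + i) *\<^sub>R gs (t0 + i) k \<omega>)"
      unfolding tt by (rule W_unroll[OF t01]) (use tz_props(4)[OF t] in \<open>simp add: d_def t0_def\<close>)
    moreover have "W t0 k \<omega> = Wb t0 \<omega>" using tz_props(5)[OF t, where \<omega>=\<omega>] k by (simp add: t0_def)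
    ultimately have e: "(norm (W t k \<omega> - Wb t0 \<omega>))\<^sup>2 = (norm (\<Sum>i<d. eta (t0 + i) *\<^sub>R gs (t0 + i) k \<omega>))\<^sup>2"
      by (simp add: norm_minus_cancel)
    also have "\<dots> \<le> real d * (\<Sum>i<d. (norm (eta (t0 + i) *\<^sub>R gs (t0 + i) k \<omega>))\<^sup>2)" by (rule cs_vec)
    also have "\<dots> \<le> (real E - 1) * (\<Sum>i<d. (eta t0)\<^sup>2 * (norm (gs (t0 + i) k \<omega>))\<^sup>2)"
    proof (rule mult_mono[OF dE])
      show "(\<Sum>i<d. (norm (eta (t0 + i) *\<^sub>R gs (t0 + i) k \<omega>))\<^sup>2) \<le> (\<Sum>i<d. (eta t0)\<^sup>2 * (norm (gs (t0 + i) k \<omega>))\<^sup>2)"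
      proof (rule sum_mono)
        fix i
        have "\<bar>eta (t0 + i)\<bar> \<le> eta t0" using eta_mono[of t0 "t0 + i"] eta_pos[of "t0 + i"] by simp
        then have "(eta (t0 + i))\<^sup>2 \<le> (eta t0)\<^sup>2" by (metis abs_le_square_iff abs_of_pos eta_pos)
        then show "(norm (eta (t0 + i) *\<^sub>R gs (t0 + i) k \<omega>))\<^sup>2 \<le> (eta t0)\<^sup>2 * (norm (gs (t0 + i) k \<omega>))\<^sup>2"
          by (simp add: power_mult_distrib mult_right_mono)
      qed
    qed (use E_pos in \<open>auto intro: sum_nonneg\<close>)
    finally have "(norm (W t k \<omega> - Wb t0 \<omega>))\<^sup>2 \<le> (real E - 1) * (\<Sum>i<d. (eta t0)\<^sup>2 * (norm (gs (t0 + i) k \<omega>))\<^sup>2)" .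
    then have "p k * (norm (W t k \<omega> - Wb t0 \<omega>))\<^sup>2 \<le> p k * ((real E - 1) * (\<Sum>i<d. (eta t0)\<^sup>2 * (norm (gs (t0 + i) k \<omega>))\<^sup>2))"
      using p_nonneg k by (intro mult_left_mono) auto
    also have "\<dots> = (\<Sum>i<d. p k * (real E - 1) * (eta t0)\<^sup>2 * (norm (gs (t0 + i) k \<omega>))\<^sup>2)"
      by (simp add: sum_distrib_left mult.assoc)
    finally show ?thesis .
  qed
  have "(\<Sum>k<N. p k * (norm (W t k \<omega> - Wb t0 \<omega>))\<^sup>2) \<le> (\<Sum>k<N. \<Sum>i<d. p k * (real E - 1) * (eta t0)\<^sup>2 * (norm (gs (t0 + i) k \<omega>))\<^sup>2)"
    by (rule sum_mono) (use B in auto)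
  with A show ?thesis by (simp add: d_def t0_def)
qed

end

context FA begin

lemma div_exp:
  assumes A4c: "\<forall>k<N. \<forall>s\<ge>1. (\<integral>\<^sup>+\<omega>. ennreal ((norm (gs s k \<omega>))\<^sup>2) \<partial>Om) \<le> ennreal (G\<^sup>2)"
    and t: "t \<ge> 1"
  shows "(\<integral>\<^sup>+\<omega>. ennreal (\<Sum>k<N. p k * (norm (Wb t \<omega> - W t k \<omega>))\<^sup>2) \<partial>Om)
      \<le> ennreal (4 * (eta t)\<^sup>2 * (real E - 1)\<^sup>2 * G\<^sup>2)"
proof -
  define t0 where "t0 = tz t"
  define d where "d = t - t0"
  define c where "c k = p k * (real E - 1) * (eta t0)\<^sup>2" for k
  have c0: "k < N \<Longrightarrow> c k \<ge> 0" for k using p_nonneg E_pos by (simp add: c_def)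
  have "(\<integral>\<^sup>+\<omega>. ennreal (\<Sum>k<N. p k * (norm (Wb t \<omega> - W t k \<omega>))\<^sup>2) \<partial>Om)
     \<le> (\<integral>\<^sup>+\<omega>. (\<Sum>k<N. \<Sum>i<d. ennreal (c k) * ennreal ((norm (gs (t0 + i) k \<omega>))\<^sup>2)) \<partial>Om)"
  proof (rule nn_integral_mono)
    fix \<omega>
    have "ennreal (\<Sum>k<N. p k * (norm (Wb t \<omega> - W t k \<omega>))\<^sup>2) \<le> ennreal (\<Sum>k<N. \<Sum>i<d. c k * (norm (gs (t0 + i) k \<omega>))\<^sup>2)"
      using div_pw[OF t, of \<omega>] by (intro ennreal_leI) (simp add: c_def d_def t0_def)
    also have "\<dots> = (\<Sum>k<N. \<Sum>i<d. ennreal (c k) * ennreal ((norm (gs (t0 + i) k \<omega>))\<^sup>2))"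
    proof -
      have "(\<Sum>k<N. \<Sum>i<d. ennreal (c k) * ennreal ((norm (gs (t0 + i) k \<omega>))\<^sup>2)) = (\<Sum>k<N. \<Sum>i<d. ennreal (c k * (norm (gs (t0 + i) k \<omega>))\<^sup>2))"
        by (intro sum.cong refl) (simp add: ennreal_mult c0)
      also have "\<dots> = (\<Sum>k<N. ennreal (\<Sum>i<d. c k * (norm (gs (t0 + i) k \<omega>))\<^sup>2))"
        by (intro sum.cong refl sum_ennreal) (use c0 in auto)
      also have "\<dots> = ennreal (\<Sum>k<N. \<Sum>i<d. c k * (norm (gs (t0 + i) k \<omega>))\<^sup>2)"
        by (rule sum_ennreal) (use c0 in \<open>auto intro: sum_nonneg\<close>)
      finally show ?thesis ..
    qed
    finally show "ennreal (\<Sum>k<N. p k * (norm (Wb t \<omega> - W t k \<omega>))\<^sup>2) \<le> (\<Sum>k<N. \<Sum>i<d. ennreal (c k) * ennreal ((norm (gs (t0 + i) k \<omega>))\<^sup>2))" .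
  qed
  also have "\<dots> = (\<Sum>k<N. \<Sum>i<d. ennreal (c k) * (\<integral>\<^sup>+\<omega>. ennreal ((norm (gs (t0 + i) k \<omega>))\<^sup>2) \<partial>Om))"
    by (subst nn_integral_sum, fastforce intro!: borel_measurable_sum)
       (intro sum.cong refl, subst nn_integral_sum, auto simp: nn_integral_cmult)
  also have "\<dots> \<le> (\<Sum>k<N. \<Sum>i<d. ennreal (c k) * ennreal (G\<^sup>2))"
    using A4c tz_props(1)[OF t] by (intro sum_mono mult_left_mono) (auto simp: t0_def)
  also have "\<dots> = (\<Sum>k<N. \<Sum>i<d. ennreal (c k * G\<^sup>2))"
    by (intro sum.cong refl) (simp add: ennreal_mult c0)
  also have "\<dots> = (\<Sum>k<N. ennreal (\<Sum>i<d. c k * G\<^sup>2))"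
    by (intro sum.cong refl sum_ennreal) (use c0 in auto)
  also have "\<dots> = ennreal (\<Sum>k<N. \<Sum>i<d. c k * G\<^sup>2)"
    by (rule sum_ennreal) (use c0 in \<open>auto intro: sum_nonneg\<close>)
  also have "(\<Sum>k<N. \<Sum>i<d. c k * G\<^sup>2) = (\<Sum>k<N. (real d * (real E - 1) * (eta t0)\<^sup>2 * G\<^sup>2) * p k)"
    by (simp add: c_def ac_simps)
  also have "\<dots> = real d * (real E - 1) * (eta t0)\<^sup>2 * G\<^sup>2"
    by (simp only: sum_distrib_left[symmetric] p_sum mult_1_right)
  also have "\<dots> \<le> 4 * (eta t)\<^sup>2 * (real E - 1)\<^sup>2 * G\<^sup>2"
  proof -
    have dE: "real d \<le> real E - 1" using tz_props(3)[OF t] E_pos unfolding d_def t0_def by linarith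
    have e2: "(eta t0)\<^sup>2 \<le> (2 * eta t)\<^sup>2"
      using eta_tz[OF t] eta_pos by (intro power_mono) (auto simp: t0_def less_imp_le)
    have "real d * (real E - 1) * (eta t0)\<^sup>2 * G\<^sup>2 \<le> (real E - 1) * (real E - 1) * (2 * eta t)\<^sup>2 * G\<^sup>2"
      using dE e2 E_pos by (intro mult_right_mono mult_mono) auto
    then show ?thesis by (simp add: power2_eq_square algebra_simps)
  qed
  finally show ?thesis by (simp add: ennreal_leI)
qed

end

context FA begin

lemma N_pos: "N > 0"
  using p_sum by (cases N) auto

lemma L_ge_mu: "L \<ge> mu"
proof -
  obtain b :: 'a where b: "b \<in> Basis" using nonempty_Basis by blast
  have nb: "norm b = 1" using b by simp
  have k: "0 < N" by (rule N_pos)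
  have "local_obj ell D 0 (0 + b) \<le> local_obj ell D 0 0 + (0 + b - 0) \<bullet> local_grad g D 0 0 + L / 2 * (norm (0 + b - 0))\<^sup>2"
    using A1 k by blast
  moreover have "local_obj ell D 0 (0 + b) \<ge> local_obj ell D 0 0 + (0 + b - 0) \<bullet> local_grad g D 0 0 + mu / 2 * (norm (0 + b - 0))\<^sup>2"
    using A2 k by blast
  ultimately show ?thesis using nb by simp
qed

lemma L_pos: "L > 0" using L_ge_mu mu_pos by simp

lemma eta_le: "t \<ge> 1 \<Longrightarrow> 4 * L * eta t \<le> 1" "t \<ge> 1 \<Longrightarrow> mu * eta t \<le> 1"
proof -
  assume t: "t \<ge> 1"
  have g8: "8 * L / mu \<le> gam" by (rule gam_ge(2))
  have "8 * L \<le> mu * gam" using g8 mu_pos by (simp add: field_simps)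
  also have "mu * gam \<le> mu * (gam + real t)" using mu_pos by simp
  finally have A: "8 * L \<le> mu * (gam + real t)" .
  have pos: "mu * (gam + real t) > 0" using mu_pos gam_ge(3) by simp
  show "4 * L * eta t \<le> 1"
    using A pos by (simp add: eta_eq field_simps)
  have "2 \<le> gam + real t" using gam_ge(3) t by simp
  then have "mu * 2 \<le> mu * (gam + real t)" using mu_pos by (intro mult_left_mono) auto
  then show "mu * eta t \<le> 1" using pos mu_pos by (simp add: eta_eq field_simps)
qed

lemma obj_bdd: "k < N \<Longrightarrow> bdd_below (range (local_obj ell D k))"
proof -
  assume k: "k < N"
  define a where "a = local_grad g D k 0"
  have "local_obj ell D k 0 - (norm a)\<^sup>2 / (2 * mu) \<le> local_obj ell D k v" for v
  proof -
    have A: "local_obj ell D k v \<ge> local_obj ell D k 0 + v \<bullet> a + mu / 2 * (norm v)\<^sup>2"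
      using A2 k unfolding a_def by (metis diff_zero)
    have "0 \<le> (norm (mu *\<^sub>R v + a))\<^sup>2" by simp
    also have "\<dots> = mu\<^sup>2 * (norm v)\<^sup>2 + 2 * mu * (v \<bullet> a) + (norm a)\<^sup>2"
      unfolding power2_norm_eq_inner
      by (simp add: inner_add_left inner_add_right inner_commute power2_eq_square algebra_simps)
    finally have "- (norm a)\<^sup>2 / (2 * mu) \<le> v \<bullet> a + mu / 2 * (norm v)\<^sup>2"
      using mu_pos by (simp add: field_simps power2_eq_square)
    with A show ?thesis by simp
  qed
  then show ?thesis by (intro bdd_belowI2) auto
qed

lemma Fs_le: "k < N \<Longrightarrow> Inf (range (local_obj ell D k)) \<le> local_obj ell D k v"
  by (rule cInf_lower) (auto intro: obj_bdd)

definition "Gam = global_obj p N ell D wstar - (\<Sum>k<N. p k * Inf (range (local_obj ell D k)))"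

lemma Gam_nonneg: "Gam \<ge> 0"
proof -
  have "(\<Sum>k<N. p k * Inf (range (local_obj ell D k))) \<le> (\<Sum>k<N. p k * local_obj ell D k wstar)"
    by (rule sum_mono, rule mult_left_mono) (use Fs_le p_nonneg in auto)
  then show ?thesis by (simp add: Gam_def global_obj_def)
qed

lemma Om_prob: "prob_space Om"
  unfolding Om_eq
  by (intro prob_space_pair W1_prob Q_prob prob_space_PiM) (auto simp: MM_def prob_space_measure_pmf)

lemma U_bound:
  assumes t: "t \<ge> 1"
  shows "(norm (U t \<omega>))\<^sup>2 \<le> (1 - mu * eta t) * (norm (Wb t \<omega> - wstar))\<^sup>2
      + 2 * (\<Sum>k<N. p k * (norm (Wb t \<omega> - W t k \<omega>))\<^sup>2) + 6 * L * (eta t)\<^sup>2 * Gam"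
proof -
  have "(norm ((\<Sum>k<N. p k *\<^sub>R W t k \<omega>) - eta t *\<^sub>R (\<Sum>k<N. p k *\<^sub>R local_grad g D k (W t k \<omega>)) - wstar))\<^sup>2
     \<le> (1 - mu * eta t) * (norm ((\<Sum>k<N. p k *\<^sub>R W t k \<omega>) - wstar))\<^sup>2
       + 2 * (\<Sum>k<N. p k * (norm ((\<Sum>j<N. p j *\<^sub>R W t j \<omega>) - W t k \<omega>))\<^sup>2)
       + 6 * L * (eta t)\<^sup>2 * ((\<Sum>k<N. p k * local_obj ell D k wstar) - (\<Sum>k<N. p k * Inf (range (local_obj ell D k))))"
  proof (rule lemma1[OF p_nonneg p_sum A1 A2 _ _ L_pos mu_pos eta_pos eta_le(1)[OF t]])
    show "\<forall>k<N. \<forall>v. Inf (range (local_obj ell D k)) \<le> local_obj ell D k v" using Fs_le by auto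
    show "\<forall>v. (\<Sum>k<N. p k * local_obj ell D k wstar) \<le> (\<Sum>k<N. p k * local_obj ell D k v)"
      using wstar_min by (simp add: global_obj_def)
  qed
  then show ?thesis
    by (simp add: U_def Wb_def[symmetric] gr_def Gam_def global_obj_def)
qed

lemma step:
  fixes sigma :: "nat \<Rightarrow> real" and G :: real
  assumes A3c: "\<forall>k<N. \<forall>s\<ge>1. (\<integral>\<^sup>+\<omega>. ennreal ((norm (gs s k \<omega> - gr s k \<omega>))\<^sup>2) \<partial>Om) \<le> ennreal ((sigma k)\<^sup>2)"
    and A4c: "\<forall>k<N. \<forall>s\<ge>1. (\<integral>\<^sup>+\<omega>. ennreal ((norm (gs s k \<omega>))\<^sup>2) \<partial>Om) \<le> ennreal (G\<^sup>2)"
    and t: "t \<ge> 1"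
  shows "(\<integral>\<^sup>+\<omega>. ennreal ((norm (Wb (Suc t) \<omega> - wstar))\<^sup>2) \<partial>Om)
    \<le> ennreal (1 - mu * eta t) * (\<integral>\<^sup>+\<omega>. ennreal ((norm (Wb t \<omega> - wstar))\<^sup>2) \<partial>Om)
      + ennreal ((eta t)\<^sup>2 * ((\<Sum>k<N. (p k)\<^sup>2 * (sigma k)\<^sup>2) + 6 * L * Gam + 8 * (real E - 1)\<^sup>2 * G\<^sup>2))"
proof -
  interpret OP: prob_space Om by (rule Om_prob)
  define et where "et = eta t"
  have me: "1 - mu * et \<ge> 0" using eta_le(2)[OF t] by (simp add: et_def)
  have etp: "et > 0" using eta_pos by (simp add: et_def)
  define Sig where "Sig = (\<Sum>k<N. (p k)\<^sup>2 * (sigma k)\<^sup>2)"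
  have Sig0: "Sig \<ge> 0" unfolding Sig_def by (intro sum_nonneg) auto
  let ?a = "\<lambda>\<omega>. (norm (Wb t \<omega> - wstar))\<^sup>2"
  let ?b = "\<lambda>\<omega>. (\<Sum>k<N. p k * (norm (Wb t \<omega> - W t k \<omega>))\<^sup>2)"
  have am: "(\<lambda>\<omega>. ennreal (?a \<omega>)) \<in> borel_measurable Om" by measurable
  have bm: "(\<lambda>\<omega>. ennreal (?b \<omega>)) \<in> borel_measurable Om"
    by (intro measurable_compose[OF _ measurable_ennreal] borel_measurable_sum borel_measurable_times
        borel_measurable_const borel_measurable_power borel_measurable_norm borel_measurable_diff Wb_meas W_meas) auto
  have b0: "?b \<omega> \<ge> 0" for \<omega> using p_nonneg by (intro sum_nonneg) auto
  have "(\<integral>\<^sup>+\<omega>. ennreal ((norm (Wb (Suc t) \<omega> - wstar))\<^sup>2) \<partial>Om)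
      = (\<integral>\<^sup>+\<omega>. ennreal ((norm (U t \<omega> - eta t *\<^sub>R (\<Sum>k<N. p k *\<^sub>R (gs t k \<omega> - gr t k \<omega>))))\<^sup>2) \<partial>Om)"
    by (simp add: decomp[OF t])
  also have "\<dots> = (\<integral>\<^sup>+\<omega>. ennreal ((norm (U t \<omega>))\<^sup>2) \<partial>Om)
         + (\<Sum>k<N. ennreal ((eta t * p k)\<^sup>2) * (\<integral>\<^sup>+\<omega>. ennreal ((norm (gs t k \<omega> - gr t k \<omega>))\<^sup>2) \<partial>Om))"
    by (rule var_sum) simp
  also have "\<dots> \<le> (\<integral>\<^sup>+\<omega>. ennreal ((norm (U t \<omega>))\<^sup>2) \<partial>Om) + (\<Sum>k<N. ennreal ((eta t * p k)\<^sup>2) * ennreal ((sigma k)\<^sup>2))"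
    using A3c t by (intro add_mono order_refl sum_mono mult_left_mono) auto
  also have "(\<Sum>k<N. ennreal ((eta t * p k)\<^sup>2) * ennreal ((sigma k)\<^sup>2)) = ennreal (et\<^sup>2 * Sig)"
  proof -
    have "(\<Sum>k<N. ennreal ((eta t * p k)\<^sup>2) * ennreal ((sigma k)\<^sup>2)) = (\<Sum>k<N. ennreal ((eta t * p k)\<^sup>2 * (sigma k)\<^sup>2))"
      by (intro sum.cong refl) (simp add: ennreal_mult)
    also have "\<dots> = ennreal (\<Sum>k<N. (eta t * p k)\<^sup>2 * (sigma k)\<^sup>2)"
      by (rule sum_ennreal) auto
    also have "(\<Sum>k<N. (eta t * p k)\<^sup>2 * (sigma k)\<^sup>2) = et\<^sup>2 * Sig"
      by (simp add: Sig_def et_def sum_distrib_left power_mult_distrib algebra_simps)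
    finally show ?thesis .
  qed
  also have "(\<integral>\<^sup>+\<omega>. ennreal ((norm (U t \<omega>))\<^sup>2) \<partial>Om)
      \<le> (\<integral>\<^sup>+\<omega>. ennreal (1 - mu * et) * ennreal (?a \<omega>) + ennreal 2 * ennreal (?b \<omega>) + ennreal (6 * L * et\<^sup>2 * Gam) \<partial>Om)"
  proof (rule nn_integral_mono)
    fix \<omega>
    have "ennreal ((norm (U t \<omega>))\<^sup>2) \<le> ennreal ((1 - mu * et) * ?a \<omega> + 2 * ?b \<omega> + 6 * L * et\<^sup>2 * Gam)"
      using U_bound[OF t, of \<omega>] by (intro ennreal_leI) (simp add: et_def)
    also have "\<dots> = ennreal (1 - mu * et) * ennreal (?a \<omega>) + ennreal 2 * ennreal (?b \<omega>) + ennreal (6 * L * et\<^sup>2 * Gam)"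
    proof -
      have n1: "0 \<le> (1 - mu * et) * ?a \<omega>" using me by simp
      have n2: "0 \<le> 2 * ?b \<omega>" using b0[of \<omega>] by simp
      have n3: "0 \<le> 6 * L * et\<^sup>2 * Gam" using Gam_nonneg L_pos by simp
      have "ennreal ((1 - mu * et) * ?a \<omega> + 2 * ?b \<omega> + 6 * L * et\<^sup>2 * Gam)
          = ennreal ((1 - mu * et) * ?a \<omega>) + ennreal (2 * ?b \<omega>) + ennreal (6 * L * et\<^sup>2 * Gam)"
        using n1 n2 n3 by (simp add: ennreal_plus)
      also have "ennreal ((1 - mu * et) * ?a \<omega>) = ennreal (1 - mu * et) * ennreal (?a \<omega>)"
        using me by (simp add: ennreal_mult)
      also have "ennreal (2 * ?b \<omega>) = ennreal 2 * ennreal (?b \<omega>)"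
        using b0[of \<omega>] by (simp add: ennreal_mult)
      finally show ?thesis .
    qed
    finally show "ennreal ((norm (U t \<omega>))\<^sup>2) \<le> ennreal (1 - mu * et) * ennreal (?a \<omega>) + ennreal 2 * ennreal (?b \<omega>) + ennreal (6 * L * et\<^sup>2 * Gam)" .
  qed
  also have "\<dots> = ennreal (1 - mu * et) * (\<integral>\<^sup>+\<omega>. ennreal (?a \<omega>) \<partial>Om) + ennreal 2 * (\<integral>\<^sup>+\<omega>. ennreal (?b \<omega>) \<partial>Om) + ennreal (6 * L * et\<^sup>2 * Gam)"
    using am bm by (simp add: nn_integral_add nn_integral_cmult OP.emeasure_space_1)
  also have "\<dots> \<le> ennreal (1 - mu * et) * (\<integral>\<^sup>+\<omega>. ennreal (?a \<omega>) \<partial>Om) + ennreal 2 * ennreal (4 * et\<^sup>2 * (real E - 1)\<^sup>2 * G\<^sup>2) + ennreal (6 * L * et\<^sup>2 * Gam)"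
    using div_exp[OF A4c t] by (intro add_mono order_refl mult_left_mono) (auto simp: et_def)
  finally have X: "(\<integral>\<^sup>+\<omega>. ennreal ((norm (Wb (Suc t) \<omega> - wstar))\<^sup>2) \<partial>Om) \<le>
     ennreal (1 - mu * et) * (\<integral>\<^sup>+\<omega>. ennreal (?a \<omega>) \<partial>Om) + (ennreal 2 * ennreal (4 * et\<^sup>2 * (real E - 1)\<^sup>2 * G\<^sup>2) + ennreal (6 * L * et\<^sup>2 * Gam) + ennreal (et\<^sup>2 * Sig))"
    by (simp add: add_ac)
  have "ennreal 2 * ennreal (4 * et\<^sup>2 * (real E - 1)\<^sup>2 * G\<^sup>2) + ennreal (6 * L * et\<^sup>2 * Gam) + ennreal (et\<^sup>2 * Sig)
     = ennreal (et\<^sup>2 * (Sig + 6 * L * Gam + 8 * (real E - 1)\<^sup>2 * G\<^sup>2))"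
  proof -
    have x0: "0 \<le> 4 * et\<^sup>2 * (real E - 1)\<^sup>2 * G\<^sup>2" by simp
    have y0: "0 \<le> 6 * L * et\<^sup>2 * Gam" using Gam_nonneg L_pos by simp
    have z0: "0 \<le> et\<^sup>2 * Sig" using Sig0 by simp
    have "ennreal 2 * ennreal (4 * et\<^sup>2 * (real E - 1)\<^sup>2 * G\<^sup>2) = ennreal (2 * (4 * et\<^sup>2 * (real E - 1)\<^sup>2 * G\<^sup>2))"
      using x0 by (rule ennreal_mult[symmetric, rotated]) simp
    also have "\<dots> + ennreal (6 * L * et\<^sup>2 * Gam) = ennreal (2 * (4 * et\<^sup>2 * (real E - 1)\<^sup>2 * G\<^sup>2) + 6 * L * et\<^sup>2 * Gam)"
      using x0 y0 by (intro ennreal_plus[symmetric]) auto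
    also have "\<dots> + ennreal (et\<^sup>2 * Sig) = ennreal (2 * (4 * et\<^sup>2 * (real E - 1)\<^sup>2 * G\<^sup>2) + 6 * L * et\<^sup>2 * Gam + et\<^sup>2 * Sig)"
      using x0 y0 z0 by (intro ennreal_plus[symmetric]) auto
    also have "2 * (4 * et\<^sup>2 * (real E - 1)\<^sup>2 * G\<^sup>2) + 6 * L * et\<^sup>2 * Gam + et\<^sup>2 * Sig = et\<^sup>2 * (Sig + 6 * L * Gam + 8 * (real E - 1)\<^sup>2 * G\<^sup>2)"
      by (simp add: algebra_simps)
    finally show ?thesis .
  qed
  with X show ?thesis by (simp add: et_def Sig_def)
qed

end

context FA begin

lemma AE_good: "AE \<omega> in Om. \<forall>s k. k < N \<longrightarrow> fst (snd \<omega>) (s,k) < n k"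
proof -
  interpret W: prob_space W1 by (rule W1_prob)
  interpret Qp: prob_space Q by (rule Q_prob)
  interpret X: prob_space "PiM II MM" unfolding MM_def by (intro prob_space_PiM prob_space_measure_pmf)
  interpret XQ: pair_sigma_finite "PiM II MM" Q by unfold_locales
  interpret XQp: prob_space "PiM II MM \<Otimes>\<^sub>M Q" by (intro prob_space_pair X.prob_space_axioms Qp.prob_space_axioms)
  interpret WX: pair_sigma_finite W1 "PiM II MM \<Otimes>\<^sub>M Q" by unfold_locales
  have cII: "countable II" unfolding II_def by (intro countable_SIGMA) (auto intro: countableI_type)
  have "AE \<xi> in PiM II MM. \<forall>sk\<in>II. \<xi> sk < length (D (snd sk))"
  proof (rule AE_ball_countable'[OF _ cII])
    fix sk assume sk: "sk \<in> II"
    have "snd sk < N" using sk by (auto simp: II_def)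
    then have ne: "{..<length (D (snd sk))} \<noteq> {}" using D_nonempty by auto
    have "AE x in MM sk. x < length (D (snd sk))"
      unfolding MM_def by (simp add: AE_measure_pmf_iff ne)
    then show "AE \<xi> in PiM II MM. \<xi> sk < length (D (snd sk))"
    proof -
      assume a: "AE x in MM sk. x < length (D (snd sk))"
      have pr: "\<And>i. prob_space (MM i)" by (simp add: MM_def prob_space_measure_pmf)
      show ?thesis using AE_PiM_component[of II MM sk "\<lambda>x. x < length (D (snd sk))", OF pr sk a] .
    qed
  qed
  then obtain N0 where N0: "{\<xi> \<in> space (PiM II MM). \<not> (\<forall>sk\<in>II. \<xi> sk < length (D (snd sk)))} \<subseteq> N0"
    "emeasure (PiM II MM) N0 = 0" "N0 \<in> sets (PiM II MM)"
    by (rule AE_E)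
  show ?thesis
  proof (rule AE_I)
    show "{\<omega> \<in> space Om. \<not> (\<forall>s k. k < N \<longrightarrow> fst (snd \<omega>) (s,k) < n k)} \<subseteq> space W1 \<times> (N0 \<times> space Q)"
    proof
      fix \<omega> assume w: "\<omega> \<in> {\<omega> \<in> space Om. \<not> (\<forall>s k. k < N \<longrightarrow> fst (snd \<omega>) (s,k) < n k)}"
      then obtain s k where sk: "k < N" "\<not> fst (snd \<omega>) (s,k) < n k" by blast
      have sp: "fst \<omega> \<in> space W1" "fst (snd \<omega>) \<in> space (PiM II MM)" "snd (snd \<omega>) \<in> space Q"
        using w unfolding Om_eq space_pair_measure by auto
      have "(s,k) \<in> II" using sk by (simp add: II_def)
      then have "fst (snd \<omega>) \<in> {\<xi> \<in> space (PiM II MM). \<not> (\<forall>sk\<in>II. \<xi> sk < length (D (snd sk)))}"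
        using sp(2) sk(2) by (auto simp: n_def intro!: bexI[of _ "(s,k)"])
      then have "fst (snd \<omega>) \<in> N0" using N0(1) by blast
      then show "\<omega> \<in> space W1 \<times> (N0 \<times> space Q)" using sp by (cases \<omega>) auto
    qed
    show "space W1 \<times> (N0 \<times> space Q) \<in> sets Om"
      unfolding Om_eq using N0(3) by auto
    show "emeasure Om (space W1 \<times> (N0 \<times> space Q)) = 0"
    proof -
      have "N0 \<times> space Q \<in> sets (PiM II MM \<Otimes>\<^sub>M Q)" using N0(3) by auto
      then have "emeasure (W1 \<Otimes>\<^sub>M (PiM II MM \<Otimes>\<^sub>M Q)) (space W1 \<times> (N0 \<times> space Q)) = emeasure W1 (space W1) * emeasure (PiM II MM \<Otimes>\<^sub>M Q) (N0 \<times> space Q)"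
        by (intro sigma_finite_measure.emeasure_pair_measure_Times prob_space_imp_sigma_finite XQp.prob_space_axioms) auto
      also have "emeasure (PiM II MM \<Otimes>\<^sub>M Q) (N0 \<times> space Q) = emeasure (PiM II MM) N0 * emeasure Q (space Q)"
        using N0(3) by (intro sigma_finite_measure.emeasure_pair_measure_Times prob_space_imp_sigma_finite Qp.prob_space_axioms) auto
      finally show ?thesis unfolding Om_eq using N0(2) by simp
    qed
  qed
qed

lemma AE_W: "AE \<omega> in Om. (\<forall>t k. k < N \<longrightarrow> fedavg_w p N E eta sg (fst \<omega>) (\<lambda>s k. fst (snd \<omega>) (s, k)) t k = W t k \<omega>)
    \<and> (\<forall>s k. k < N \<longrightarrow> fst (snd \<omega>) (s, k) = xic \<omega> s k)"
  using AE_good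
proof (rule eventually_mono)
  fix \<omega> :: "'a \<times> (nat \<times> nat \<Rightarrow> nat) \<times> 'r" assume g: "\<forall>s k. k < N \<longrightarrow> fst (snd \<omega>) (s,k) < n k"
  have x: "\<forall>s k. k < N \<longrightarrow> fst (snd \<omega>) (s, k) = xic \<omega> s k" using g by (auto simp: xic_def)
  moreover have "\<forall>t k. k < N \<longrightarrow> fedavg_w p N E eta sg (fst \<omega>) (\<lambda>s k. fst (snd \<omega>) (s, k)) t k = W t k \<omega>"
    unfolding W_def using x by (auto intro!: fw_cong)
  ultimately show "(\<forall>t k. k < N \<longrightarrow> fedavg_w p N E eta sg (fst \<omega>) (\<lambda>s k. fst (snd \<omega>) (s, k)) t k = W t k \<omega>)
    \<and> (\<forall>s k. k < N \<longrightarrow> fst (snd \<omega>) (s, k) = xic \<omega> s k)" by blast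
qed

lemma rec_real:
  fixes u v beta :: real
  assumes u: "u \<ge> 2" and bv: "beta \<le> v" and b0: "beta \<ge> 0"
  shows "(1 - 2 / u) * (v / u) + beta / u\<^sup>2 \<le> v / (u + 1)"
proof -
  have up: "u > 0" using u by simp
  have v0: "v \<ge> 0" using bv b0 by simp
  have e: "(1 - 2 / u) * (v / u) + beta / u\<^sup>2 = ((u - 2) * v + beta) / u\<^sup>2"
    using up by (simp add: field_simps power2_eq_square)
  have a: "((u - 2) * v + beta) * (u + 1) \<le> ((u - 1) * v) * (u + 1)"
    using bv up by (intro mult_right_mono) (auto simp: algebra_simps)
  have b: "((u - 1) * v) * (u + 1) \<le> v * u\<^sup>2"
    using v0 by (simp add: algebra_simps power2_eq_square)
  have "((u - 2) * v + beta) * (u + 1) \<le> v * u\<^sup>2" using a b by linarith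
  then have "((u - 2) * v + beta) / u\<^sup>2 \<le> v / (u + 1)"
    using up by (simp add: field_simps)
  with e show ?thesis by simp
qed

lemma conv:
  fixes sigma :: "nat \<Rightarrow> real" and G d1 :: real
  assumes A3c: "\<forall>k<N. \<forall>s\<ge>1. (\<integral>\<^sup>+\<omega>. ennreal ((norm (gs s k \<omega> - gr s k \<omega>))\<^sup>2) \<partial>Om) \<le> ennreal ((sigma k)\<^sup>2)"
    and A4c: "\<forall>k<N. \<forall>s\<ge>1. (\<integral>\<^sup>+\<omega>. ennreal ((norm (gs s k \<omega>))\<^sup>2) \<partial>Om) \<le> ennreal (G\<^sup>2)"
    and d1: "(\<integral>\<^sup>+\<omega>. ennreal ((norm (fst \<omega> - wstar))\<^sup>2) \<partial>Om) = ennreal d1" "d1 \<ge> 0"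
    and t: "t \<ge> 1"
  shows "(\<integral>\<^sup>+\<omega>. ennreal ((norm (Wb t \<omega> - wstar))\<^sup>2) \<partial>Om)
    \<le> ennreal ((4 * ((\<Sum>k<N. (p k)\<^sup>2 * (sigma k)\<^sup>2) + 6 * L * Gam + 8 * (real E - 1)\<^sup>2 * G\<^sup>2) / mu\<^sup>2 + (gam + 1) * d1) / (gam + real t))"
  using t
proof (induction t rule: nat_induct_at_least)
  case base
  define Bc where "Bc = (\<Sum>k<N. (p k)\<^sup>2 * (sigma k)\<^sup>2) + 6 * L * Gam + 8 * (real E - 1)\<^sup>2 * G\<^sup>2"
  have Bc0: "Bc \<ge> 0" unfolding Bc_def using Gam_nonneg L_pos by (intro add_nonneg_nonneg sum_nonneg) auto
  have "d1 \<le> (4 * Bc / mu\<^sup>2 + (gam + 1) * d1) / (gam + 1)"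
  proof -
    have "(4 * Bc / mu\<^sup>2 + (gam + 1) * d1) / (gam + 1) = (4 * Bc / mu\<^sup>2) / (gam + 1) + d1"
      using gam_ge(3) by (simp add: add_divide_distrib)
    moreover have "(4 * Bc / mu\<^sup>2) / (gam + 1) \<ge> 0" using Bc0 gam_ge(3) by simp
    ultimately show ?thesis by simp
  qed
  then show ?case using d1 by (simp add: Wb_1 Bc_def ennreal_leI)
next
  case (Suc n)
  define Bc where "Bc = (\<Sum>k<N. (p k)\<^sup>2 * (sigma k)\<^sup>2) + 6 * L * Gam + 8 * (real E - 1)\<^sup>2 * G\<^sup>2"
  have Bc0: "Bc \<ge> 0" unfolding Bc_def using Gam_nonneg L_pos by (intro add_nonneg_nonneg sum_nonneg) auto
  define v where "v = 4 * Bc / mu\<^sup>2 + (gam + 1) * d1"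
  define u where "u = gam + real n"
  have u2: "u \<ge> 2" using gam_ge(3) Suc.hyps by (simp add: u_def)
  have me: "1 - mu * eta n \<ge> 0" using eta_le(2)[OF Suc.hyps] by simp
  have IH: "(\<integral>\<^sup>+\<omega>. ennreal ((norm (Wb n \<omega> - wstar))\<^sup>2) \<partial>Om) \<le> ennreal (v / u)"
    using Suc.IH by (simp add: v_def u_def Bc_def)
  have "(\<integral>\<^sup>+\<omega>. ennreal ((norm (Wb (Suc n) \<omega> - wstar))\<^sup>2) \<partial>Om)
      \<le> ennreal (1 - mu * eta n) * (\<integral>\<^sup>+\<omega>. ennreal ((norm (Wb n \<omega> - wstar))\<^sup>2) \<partial>Om) + ennreal ((eta n)\<^sup>2 * Bc)"
    unfolding Bc_def by (rule step[OF A3c A4c Suc.hyps])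
  also have "\<dots> \<le> ennreal (1 - mu * eta n) * ennreal (v / u) + ennreal ((eta n)\<^sup>2 * Bc)"
    using IH by (intro add_mono mult_left_mono) auto
  also have "\<dots> = ennreal ((1 - mu * eta n) * (v / u) + (eta n)\<^sup>2 * Bc)"
  proof -
    have "v \<ge> 0" unfolding v_def using Bc0 d1(2) gam_ge(3) by (intro add_nonneg_nonneg) auto
    then have "v / u \<ge> 0" using u2 by simp
    then have vu: "v / u \<ge> 0" .
    have "ennreal ((1 - mu * eta n) * (v / u) + (eta n)\<^sup>2 * Bc) = ennreal ((1 - mu * eta n) * (v / u)) + ennreal ((eta n)\<^sup>2 * Bc)"
      using me vu Bc0 by (intro ennreal_plus mult_nonneg_nonneg) auto
    also have "ennreal ((1 - mu * eta n) * (v / u)) = ennreal (1 - mu * eta n) * ennreal (v / u)"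
      using me vu by (rule ennreal_mult)
    finally show ?thesis by simp
  qed
  also have "\<dots> \<le> ennreal (v / (u + 1))"
  proof (rule ennreal_leI)
    have en: "eta n = 2 / (mu * u)" by (simp add: eta_eq u_def)
    have "(1 - mu * eta n) * (v / u) + (eta n)\<^sup>2 * Bc = (1 - 2 / u) * (v / u) + (4 * Bc / mu\<^sup>2) / u\<^sup>2"
      using mu_pos u2 by (simp add: en field_simps power2_eq_square)
    also have "\<dots> \<le> v / (u + 1)"
      by (rule rec_real[OF u2]) (use Bc0 d1(2) gam_ge(3) mu_pos in \<open>auto simp: v_def\<close>)
    finally show "(1 - mu * eta n) * (v / u) + (eta n)\<^sup>2 * Bc \<le> v / (u + 1)" .
  qed
  finally have fin: "(\<integral>\<^sup>+\<omega>. ennreal ((norm (Wb (Suc n) \<omega> - wstar))\<^sup>2) \<partial>Om) \<le> ennreal (v / (u + 1))" .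
  have eqd: "gam + real (Suc n) = u + 1" by (simp add: u_def)
  show ?case unfolding eqd using fin unfolding v_def Bc_def .
qed

end

theorem theorem1:
  fixes p :: "nat \<Rightarrow> real" and N :: nat and E :: nat
    and D :: "nat \<Rightarrow> 'z list"
    and ell :: "'a::euclidean_space \<Rightarrow> 'z \<Rightarrow> real" and g :: "'a \<Rightarrow> 'z \<Rightarrow> 'a"
    and L mu G LR :: real and sigma :: "nat \<Rightarrow> real"
    and wstar :: 'a
    and W1 :: "'a measure" and Q :: "'r measure"
    and Rf :: "'r \<Rightarrow> 'a \<Rightarrow> real^'d" and x :: "real^'d"
    and t :: nat
  assumes p_nonneg: "\<forall>k<N. p k \<ge> 0"
    and p_sum: "(\<Sum>k<N. p k) = 1"
    and E_pos: "E \<ge> 1"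
    and D_nonempty: "\<forall>k<N. D k \<noteq> []"
    and grad: "\<forall>k<N. \<forall>j<length (D k). \<forall>w. GDERIV (\<lambda>v. ell v (D k ! j)) w :> g w (D k ! j)"
    and A1: "\<forall>k<N. \<forall>v w. local_obj ell D k v \<le> local_obj ell D k w
               + (v - w) \<bullet> local_grad g D k w + L / 2 * (norm (v - w))\<^sup>2"
    and mu_pos: "mu > 0"
    and A2: "\<forall>k<N. \<forall>v w. local_obj ell D k v \<ge> local_obj ell D k w
               + (v - w) \<bullet> local_grad g D k w + mu / 2 * (norm (v - w))\<^sup>2"
    and wstar_min: "\<forall>w. global_obj p N ell D wstar \<le> global_obj p N ell D w"
    and W1_prob: "prob_space W1" and W1_sets: "sets W1 = sets borel"
    and Q_prob: "prob_space Q"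
    and Rf_meas: "\<forall>v. (\<lambda>r. Rf r v) \<in> borel_measurable Q"
    and Rf_lip: "\<forall>r v w. dist (Rf r v) (Rf r w) \<le> LR * dist v w"
    and x_box: "\<forall>i. x $ i \<in> {0..1}"
    and A3: "\<forall>k<N. \<forall>s\<ge>1.
        (\<integral>\<^sup>+ \<omega>. ennreal ((norm (
            g (fedavg_w p N E (\<lambda>s. 2 / (mu * (max (8 * L / mu) (real E) + real s)))
                 (\<lambda>k w j. g w (D k ! j)) (fst \<omega>) (\<lambda>s k. fst (snd \<omega>) (s, k)) s k)
              (D k ! (fst (snd \<omega>) (s, k)))
          - local_grad g D k (fedavg_w p N E (\<lambda>s. 2 / (mu * (max (8 * L / mu) (real E) + real s)))
                 (\<lambda>k w j. g w (D k ! j)) (fst \<omega>) (\<lambda>s k. fst (snd \<omega>) (s, k)) s k)))\<^sup>2)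
          \<partial>fedavg_space W1 N D Q) \<le> ennreal ((sigma k)\<^sup>2)"
    and A4: "\<forall>k<N. \<forall>s\<ge>1.
        (\<integral>\<^sup>+ \<omega>. ennreal ((norm (
            g (fedavg_w p N E (\<lambda>s. 2 / (mu * (max (8 * L / mu) (real E) + real s)))
                 (\<lambda>k w j. g w (D k ! j)) (fst \<omega>) (\<lambda>s k. fst (snd \<omega>) (s, k)) s k)
              (D k ! (fst (snd \<omega>) (s, k)))))\<^sup>2)
          \<partial>fedavg_space W1 N D Q) \<le> ennreal (G\<^sup>2)"
    and t_pos: "t \<ge> 1"
  shows "(\<integral>\<^sup>+ \<omega>. ennreal ((norm (x - Rf (snd (snd \<omega>))
              (fedavg_global p N E (\<lambda>s. 2 / (mu * (max (8 * L / mu) (real E) + real s)))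
                 (\<lambda>k w j. g w (D k ! j)) (fst \<omega>) (\<lambda>s k. fst (snd \<omega>) (s, k)) t)))\<^sup>2)
            \<partial>fedavg_space W1 N D Q)
    \<le> 2 * (\<integral>\<^sup>+ \<omega>. ennreal ((norm (x - Rf (snd (snd \<omega>)) wstar))\<^sup>2) \<partial>fedavg_space W1 N D Q)
      + ennreal (2 * LR\<^sup>2 / (max (8 * L / mu) (real E) + real t)) *
        (ennreal (4 * ((\<Sum>k<N. (p k)\<^sup>2 * (sigma k)\<^sup>2)
                        + 6 * L * (global_obj p N ell D wstar
                                   - (\<Sum>k<N. p k * Inf (range (local_obj ell D k))))
                        + 8 * (real E - 1)\<^sup>2 * G\<^sup>2) / mu\<^sup>2)
         + ennreal (max (8 * L / mu) (real E) + 1) *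
           (\<integral>\<^sup>+ \<omega>. ennreal ((norm (fst \<omega> - wstar))\<^sup>2) \<partial>fedavg_space W1 N D Q))"
proof -
  interpret FA p N E D ell g L mu wstar W1 Q
    by (rule FA.intro[OF p_nonneg p_sum E_pos D_nonempty grad A1 mu_pos A2 wstar_min W1_prob W1_sets Q_prob])
  have e1: "(\<lambda>s. 2 / (mu * (max (8 * L / mu) (real E) + real s))) = eta" by (simp add: eta_def)
  have e2: "(\<lambda>k w j. g w (D k ! j)) = sg" by (simp add: sg_def fun_eq_iff)
  have e3: "fedavg_space W1 N D Q = Om" by (simp add: Om_def)
  have e4: "max (8 * L / mu) (real E) = gam" by (simp add: gam_def)
  have e5: "global_obj p N ell D wstar - (\<Sum>k<N. p k * Inf (range (local_obj ell D k))) = Gam" by (simp add: Gam_def)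
  note AEW = AE_W
  have A3c: "\<forall>k<N. \<forall>s\<ge>1. (\<integral>\<^sup>+\<omega>. ennreal ((norm (gs s k \<omega> - gr s k \<omega>))\<^sup>2) \<partial>Om) \<le> ennreal ((sigma k)\<^sup>2)"
  proof (intro allI impI)
    fix k s :: nat assume k: "k < N" and s: "1 \<le> s"
    have "(\<integral>\<^sup>+\<omega>. ennreal ((norm (gs s k \<omega> - gr s k \<omega>))\<^sup>2) \<partial>Om) =
      (\<integral>\<^sup>+ \<omega>. ennreal ((norm (g (fedavg_w p N E eta sg (fst \<omega>) (\<lambda>s k. fst (snd \<omega>) (s, k)) s k) (D k ! (fst (snd \<omega>) (s, k)))
          - local_grad g D k (fedavg_w p N E eta sg (fst \<omega>) (\<lambda>s k. fst (snd \<omega>) (s, k)) s k)))\<^sup>2) \<partial>Om)"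
      by (rule nn_integral_cong_AE, rule eventually_mono[OF AEW]) (use k in \<open>auto simp: gs_def gr_def\<close>)
    also have "\<dots> \<le> ennreal ((sigma k)\<^sup>2)" using A3 k s unfolding e1 e2 e3 by blast
    finally show "(\<integral>\<^sup>+\<omega>. ennreal ((norm (gs s k \<omega> - gr s k \<omega>))\<^sup>2) \<partial>Om) \<le> ennreal ((sigma k)\<^sup>2)" .
  qed
  have A4c: "\<forall>k<N. \<forall>s\<ge>1. (\<integral>\<^sup>+\<omega>. ennreal ((norm (gs s k \<omega>))\<^sup>2) \<partial>Om) \<le> ennreal (G\<^sup>2)"
  proof (intro allI impI)
    fix k s :: nat assume k: "k < N" and s: "1 \<le> s"
    have "(\<integral>\<^sup>+\<omega>. ennreal ((norm (gs s k \<omega>))\<^sup>2) \<partial>Om) =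
      (\<integral>\<^sup>+ \<omega>. ennreal ((norm (g (fedavg_w p N E eta sg (fst \<omega>) (\<lambda>s k. fst (snd \<omega>) (s, k)) s k) (D k ! (fst (snd \<omega>) (s, k)))))\<^sup>2) \<partial>Om)"
      by (rule nn_integral_cong_AE, rule eventually_mono[OF AEW]) (use k in \<open>auto simp: gs_def\<close>)
    also have "\<dots> \<le> ennreal (G\<^sup>2)" using A4 k s unfolding e1 e2 e3 by blast
    finally show "(\<integral>\<^sup>+\<omega>. ennreal ((norm (gs s k \<omega>))\<^sup>2) \<partial>Om) \<le> ennreal (G\<^sup>2)" .
  qed
  define A where "A \<omega> = (norm (x - Rf (snd (snd \<omega>)) wstar))\<^sup>2" for \<omega> :: "'a \<times> (nat \<times> nat \<Rightarrow> nat) \<times> 'r"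
  define B where "B \<omega> = (norm (Wb t \<omega> - wstar))\<^sup>2" for \<omega> :: "'a \<times> (nat \<times> nat \<Rightarrow> nat) \<times> 'r"
  define I1 where "I1 = (\<integral>\<^sup>+\<omega>. ennreal ((norm (fst \<omega> - wstar))\<^sup>2) \<partial>Om)"
  have Am: "(\<lambda>\<omega>. ennreal (A \<omega>)) \<in> borel_measurable Om"
  proof -
    have sm: "(\<lambda>\<omega>. snd (snd \<omega>)) \<in> measurable Om Q" unfolding Om_eq by measurable
    have "(\<lambda>\<omega>. Rf (snd (snd \<omega>)) wstar) \<in> borel_measurable Om"
      using measurable_compose[OF sm] Rf_meas by blast
    then show ?thesis unfolding A_def by measurable
  qed
  have Bm: "(\<lambda>\<omega>. ennreal (B \<omega>)) \<in> borel_measurable Om" unfolding B_def by measurable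
  have pw: "ennreal ((norm (x - Rf (snd (snd \<omega>)) (Wb t \<omega>)))\<^sup>2) \<le> 2 * ennreal (A \<omega>) + ennreal (2 * LR\<^sup>2) * ennreal (B \<omega>)" for \<omega>
  proof -
    define r where "r = snd (snd \<omega>)"
    define a where "a = norm (x - Rf r wstar)"
    define b where "b = norm (Rf r wstar - Rf r (Wb t \<omega>))"
    have tri: "norm (x - Rf r (Wb t \<omega>)) \<le> a + b"
      unfolding a_def b_def by (rule norm_diff_triangle_le[where y="Rf r wstar"]) simp_all
    have b0: "b \<ge> 0" unfolding b_def by simp
    have bl: "b \<le> LR * norm (Wb t \<omega> - wstar)"
      using Rf_lip unfolding b_def by (metis dist_norm norm_minus_commute)
    have b2: "b\<^sup>2 \<le> LR\<^sup>2 * (norm (Wb t \<omega> - wstar))\<^sup>2"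
    proof -
      have "b\<^sup>2 \<le> (LR * norm (Wb t \<omega> - wstar))\<^sup>2" using b0 bl by (intro power_mono) auto
      then show ?thesis by (simp add: power_mult_distrib)
    qed
    have "(norm (x - Rf r (Wb t \<omega>)))\<^sup>2 \<le> (a + b)\<^sup>2" using tri by (intro power_mono) auto
    also have "\<dots> \<le> 2 * a\<^sup>2 + 2 * b\<^sup>2"
      using sum_squares_bound[of a b] by (simp add: power2_sum algebra_simps power2_eq_square)
    also have "\<dots> \<le> 2 * a\<^sup>2 + 2 * (LR\<^sup>2 * (norm (Wb t \<omega> - wstar))\<^sup>2)" using b2 by simp
    finally have R: "(norm (x - Rf r (Wb t \<omega>)))\<^sup>2 \<le> 2 * A \<omega> + (2 * LR\<^sup>2) * B \<omega>"
      by (simp add: A_def B_def a_def r_def)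
    have "ennreal ((norm (x - Rf r (Wb t \<omega>)))\<^sup>2) \<le> ennreal (2 * A \<omega> + (2 * LR\<^sup>2) * B \<omega>)"
      using R by (rule ennreal_leI)
    also have "\<dots> = 2 * ennreal (A \<omega>) + ennreal (2 * LR\<^sup>2) * ennreal (B \<omega>)"
      by (simp add: A_def B_def ennreal_plus ennreal_mult)
    finally show ?thesis by (simp add: r_def)
  qed
  have LHS: "(\<integral>\<^sup>+\<omega>. ennreal ((norm (x - Rf (snd (snd \<omega>)) (fedavg_global p N E eta sg (fst \<omega>) (\<lambda>s k. fst (snd \<omega>) (s, k)) t)))\<^sup>2) \<partial>Om)
     \<le> 2 * (\<integral>\<^sup>+\<omega>. ennreal (A \<omega>) \<partial>Om) + ennreal (2 * LR\<^sup>2) * (\<integral>\<^sup>+\<omega>. ennreal (B \<omega>) \<partial>Om)"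
  proof -
    have "(\<integral>\<^sup>+\<omega>. ennreal ((norm (x - Rf (snd (snd \<omega>)) (fedavg_global p N E eta sg (fst \<omega>) (\<lambda>s k. fst (snd \<omega>) (s, k)) t)))\<^sup>2) \<partial>Om)
       = (\<integral>\<^sup>+\<omega>. ennreal ((norm (x - Rf (snd (snd \<omega>)) (Wb t \<omega>)))\<^sup>2) \<partial>Om)"
      by (rule nn_integral_cong_AE, rule eventually_mono[OF AEW]) (auto simp: fedavg_global_def Wb_def intro!: sum.cong)
    also have "\<dots> \<le> (\<integral>\<^sup>+\<omega>. 2 * ennreal (A \<omega>) + ennreal (2 * LR\<^sup>2) * ennreal (B \<omega>) \<partial>Om)"
      by (rule nn_integral_mono) (rule pw)
    also have "\<dots> = 2 * (\<integral>\<^sup>+\<omega>. ennreal (A \<omega>) \<partial>Om) + ennreal (2 * LR\<^sup>2) * (\<integral>\<^sup>+\<omega>. ennreal (B \<omega>) \<partial>Om)"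
      using Am Bm by (simp add: nn_integral_add nn_integral_cmult)
    finally show ?thesis .
  qed
  define Bc where "Bc = (\<Sum>k<N. (p k)\<^sup>2 * (sigma k)\<^sup>2) + 6 * L * Gam + 8 * (real E - 1)\<^sup>2 * G\<^sup>2"
  have main: "2 * (\<integral>\<^sup>+\<omega>. ennreal (A \<omega>) \<partial>Om) + ennreal (2 * LR\<^sup>2) * (\<integral>\<^sup>+\<omega>. ennreal (B \<omega>) \<partial>Om)
    \<le> 2 * (\<integral>\<^sup>+\<omega>. ennreal (A \<omega>) \<partial>Om) + ennreal (2 * LR\<^sup>2 / (gam + real t)) * (ennreal (4 * Bc / mu\<^sup>2) + ennreal (gam + 1) * I1)"
  proof (cases "LR = 0")
    case True then show ?thesis by simp
  next
    case LRn: False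
    have gt: "gam + real t > 0" using gam_ge(3) by simp
    have c0: "2 * LR\<^sup>2 / (gam + real t) > 0" using LRn gt by simp
    show ?thesis
    proof (cases "I1 = \<top>")
      case True
      have "ennreal (gam + 1) * I1 = \<top>" using True gam_ge(3) by (simp add: ennreal_mult_top)
      then have "ennreal (2 * LR\<^sup>2 / (gam + real t)) * (ennreal (4 * Bc / mu\<^sup>2) + ennreal (gam + 1) * I1) = \<top>"
        using c0 LRn gt by (simp add: ennreal_mult_top)
      then show ?thesis by simp
    next
      case False
      define d1 where "d1 = enn2real I1"
      have d1e: "I1 = ennreal d1" using False by (simp add: d1_def ennreal_enn2real_if)
      have d10: "d1 \<ge> 0" by (simp add: d1_def)
      have cv: "(\<integral>\<^sup>+\<omega>. ennreal (B \<omega>) \<partial>Om) \<le> ennreal ((4 * Bc / mu\<^sup>2 + (gam + 1) * d1) / (gam + real t))"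
        unfolding B_def Bc_def using conv[OF A3c A4c _ d10 t_pos] d1e unfolding I1_def by blast
      have Bc0: "Bc \<ge> 0" unfolding Bc_def using Gam_nonneg L_pos by (intro add_nonneg_nonneg sum_nonneg) auto
      have "ennreal (2 * LR\<^sup>2) * (\<integral>\<^sup>+\<omega>. ennreal (B \<omega>) \<partial>Om) \<le> ennreal (2 * LR\<^sup>2) * ennreal ((4 * Bc / mu\<^sup>2 + (gam + 1) * d1) / (gam + real t))"
        using cv by (rule mult_left_mono) simp
      also have "\<dots> = ennreal (2 * LR\<^sup>2 / (gam + real t)) * (ennreal (4 * Bc / mu\<^sup>2) + ennreal (gam + 1) * I1)"
      proof -
        have "ennreal (2 * LR\<^sup>2) * ennreal ((4 * Bc / mu\<^sup>2 + (gam + 1) * d1) / (gam + real t))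
            = ennreal (2 * LR\<^sup>2 * ((4 * Bc / mu\<^sup>2 + (gam + 1) * d1) / (gam + real t)))"
          using Bc0 d10 gt gam_ge(3) by (intro ennreal_mult[symmetric]) auto
        also have "2 * LR\<^sup>2 * ((4 * Bc / mu\<^sup>2 + (gam + 1) * d1) / (gam + real t)) = (2 * LR\<^sup>2 / (gam + real t)) * (4 * Bc / mu\<^sup>2 + (gam + 1) * d1)"
          by simp
        also have "ennreal \<dots> = ennreal (2 * LR\<^sup>2 / (gam + real t)) * ennreal (4 * Bc / mu\<^sup>2 + (gam + 1) * d1)"
          using Bc0 d10 gt gam_ge(3) by (intro ennreal_mult) auto
        also have "ennreal (4 * Bc / mu\<^sup>2 + (gam + 1) * d1) = ennreal (4 * Bc / mu\<^sup>2) + ennreal (gam + 1) * I1"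
          using Bc0 d10 gam_ge(3) d1e by (simp add: ennreal_plus ennreal_mult)
        finally show ?thesis .
      qed
      finally show ?thesis by (intro add_mono order_refl)
    qed
  qed
  show ?thesis
    unfolding e1 e2 e3
    unfolding e4 e5
    using order_trans[OF LHS main] unfolding A_def I1_def Bc_def .
qed

end
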